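(* $W'_{\mathrm{tw}}(C_4)=4$.
   Context: Graphs are finite simple graphs; $C_4$ is the cycle on 4 vertices. A graph is 2-connected if it has more than 2 vertices, is connected, and remains connected after removal of any single vertex. We use first-order logic of graphs with relation symbols for adjacency and equality only; the variable width of a sentence is the number of distinct variables it uses. For a graph $F$, $W'_{\mathrm{tw}}(F)$ is the minimum $m$ for which there are a first-order sentence $\Phi$ of variable width $m$ and an integer $k$ such that for every 2-connected graph $G$ of treewidth at least $k$, $G\models\Phi$ if and only if $G$ contains a (not necessarily induced) subgraph isomorphic to $F$. *)

theory Defs
  imports Main
begin

definition simple_graph :: "nat set \<Rightarrow> (nat \<Rightarrow> nat \<Rightarrow> bool) \<Rightarrow> bool" where
  "simple_graph V E \<longleftrightarrow> finite V \<and>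
     (\<forall>u v. E u v \<longrightarrow> u \<in> V \<and> v \<in> V \<and> u \<noteq> v \<and> E v u)"

text \<open>The vertex set S induces a connected subgraph (empty S counts as connected).\<close>
definition connected_on :: "(nat \<Rightarrow> nat \<Rightarrow> bool) \<Rightarrow> nat set \<Rightarrow> bool" where
  "connected_on E S \<longleftrightarrow>
     (\<forall>u\<in>S. \<forall>w\<in>S. (\<lambda>x y. x \<in> S \<and> y \<in> S \<and> E x y)\<^sup>*\<^sup>* u w)"

definition connected_graph :: "nat set \<Rightarrow> (nat \<Rightarrow> nat \<Rightarrow> bool) \<Rightarrow> bool" where
  "connected_graph V E \<longleftrightarrow> V \<noteq> {} \<and> connected_on E V"

definition two_connected :: "nat set \<Rightarrow> (nat \<Rightarrow> nat \<Rightarrow> bool) \<Rightarrow> bool" where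
  "two_connected V E \<longleftrightarrow> card V > 2 \<and> connected_graph V E \<and>
     (\<forall>v\<in>V. connected_graph (V - {v}) E)"

definition contains_subgraph ::
  "nat set \<Rightarrow> (nat \<Rightarrow> nat \<Rightarrow> bool) \<Rightarrow> nat set \<Rightarrow> (nat \<Rightarrow> nat \<Rightarrow> bool) \<Rightarrow> bool" where
  "contains_subgraph V E VF EF \<longleftrightarrow>
     (\<exists>f. inj_on f VF \<and> f ` VF \<subseteq> V \<and>
          (\<forall>u\<in>VF. \<forall>w\<in>VF. EF u w \<longrightarrow> E (f u) (f w)))"

definition C4_V :: "nat set" where "C4_V = {0, 1, 2, 3}"
definition C4_E :: "nat \<Rightarrow> nat \<Rightarrow> bool" where
  "C4_E i j \<longleftrightarrow> i \<in> C4_V \<and> j \<in> C4_V \<and> (j = (i + 1) mod 4 \<or> i = (j + 1) mod 4)"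

definition has_cycle :: "nat set \<Rightarrow> (nat \<Rightarrow> nat \<Rightarrow> bool) \<Rightarrow> bool" where
  "has_cycle N TE \<longleftrightarrow> (\<exists>xs. length xs \<ge> 3 \<and> distinct xs \<and> set xs \<subseteq> N \<and>
      (\<forall>i. Suc i < length xs \<longrightarrow> TE (xs ! i) (xs ! Suc i)) \<and> TE (last xs) (hd xs))"

definition is_tree :: "nat set \<Rightarrow> (nat \<Rightarrow> nat \<Rightarrow> bool) \<Rightarrow> bool" where
  "is_tree N TE \<longleftrightarrow> simple_graph N TE \<and> connected_graph N TE \<and> \<not> has_cycle N TE"

definition tree_decomposition ::
  "nat set \<Rightarrow> (nat \<Rightarrow> nat \<Rightarrow> bool) \<Rightarrow> nat set \<Rightarrow> (nat \<Rightarrow> nat \<Rightarrow> bool) \<Rightarrow> (nat \<Rightarrow> nat set) \<Rightarrow> bool"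
  where
  "tree_decomposition V E N TE B \<longleftrightarrow> is_tree N TE \<and>
     (\<forall>t\<in>N. B t \<subseteq> V) \<and>
     (\<forall>v\<in>V. \<exists>t\<in>N. v \<in> B t) \<and>
     (\<forall>u v. E u v \<longrightarrow> (\<exists>t\<in>N. u \<in> B t \<and> v \<in> B t)) \<and>
     (\<forall>v\<in>V. connected_on TE {t \<in> N. v \<in> B t})"

definition decomp_width :: "nat set \<Rightarrow> (nat \<Rightarrow> nat set) \<Rightarrow> nat" where
  "decomp_width N B = Max ((\<lambda>t. card (B t)) ` N) - 1"

definition treewidth :: "nat set \<Rightarrow> (nat \<Rightarrow> nat \<Rightarrow> bool) \<Rightarrow> nat" where
  "treewidth V E = (LEAST w. \<exists>N TE B. tree_decomposition V E N TE B \<and> decomp_width N B = w)"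

datatype fo = Adj nat nat | Eq nat nat | Tru | Fls | Neg fo | Conj fo fo | Disj fo fo
  | Imp fo fo | Iff fo fo | Ex nat fo | All nat fo

fun vars :: "fo \<Rightarrow> nat set" where
  "vars (Adj x y) = {x, y}"
| "vars (Eq x y) = {x, y}"
| "vars Tru = {}"
| "vars Fls = {}"
| "vars (Neg p) = vars p"
| "vars (Conj p q) = vars p \<union> vars q"
| "vars (Disj p q) = vars p \<union> vars q"
| "vars (Imp p q) = vars p \<union> vars q"
| "vars (Iff p q) = vars p \<union> vars q"
| "vars (Ex x p) = insert x (vars p)"
| "vars (All x p) = insert x (vars p)"

fun free_vars :: "fo \<Rightarrow> nat set" where
  "free_vars (Adj x y) = {x, y}"
| "free_vars (Eq x y) = {x, y}"
| "free_vars Tru = {}"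
| "free_vars Fls = {}"
| "free_vars (Neg p) = free_vars p"
| "free_vars (Conj p q) = free_vars p \<union> free_vars q"
| "free_vars (Disj p q) = free_vars p \<union> free_vars q"
| "free_vars (Imp p q) = free_vars p \<union> free_vars q"
| "free_vars (Iff p q) = free_vars p \<union> free_vars q"
| "free_vars (Ex x p) = free_vars p - {x}"
| "free_vars (All x p) = free_vars p - {x}"

definition sentence :: "fo \<Rightarrow> bool" where "sentence p \<longleftrightarrow> free_vars p = {}"

definition var_width :: "fo \<Rightarrow> nat" where "var_width p = card (vars p)"

fun sat :: "nat set \<Rightarrow> (nat \<Rightarrow> nat \<Rightarrow> bool) \<Rightarrow> (nat \<Rightarrow> nat) \<Rightarrow> fo \<Rightarrow> bool" where
  "sat V E a (Adj x y) = E (a x) (a y)"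
| "sat V E a (Eq x y) = (a x = a y)"
| "sat V E a Tru = True"
| "sat V E a Fls = False"
| "sat V E a (Neg p) = (\<not> sat V E a p)"
| "sat V E a (Conj p q) = (sat V E a p \<and> sat V E a q)"
| "sat V E a (Disj p q) = (sat V E a p \<or> sat V E a q)"
| "sat V E a (Imp p q) = (sat V E a p \<longrightarrow> sat V E a q)"
| "sat V E a (Iff p q) = (sat V E a p \<longleftrightarrow> sat V E a q)"
| "sat V E a (Ex x p) = (\<exists>v\<in>V. sat V E (a(x := v)) p)"
| "sat V E a (All x p) = (\<forall>v\<in>V. sat V E (a(x := v)) p)"

definition models :: "nat set \<Rightarrow> (nat \<Rightarrow> nat \<Rightarrow> bool) \<Rightarrow> fo \<Rightarrow> bool" where
  "models V E p \<longleftrightarrow> (\<forall>a. sat V E a p)"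

definition W'_tw :: "nat set \<Rightarrow> (nat \<Rightarrow> nat \<Rightarrow> bool) \<Rightarrow> nat" where
  "W'_tw VF EF = (LEAST m. \<exists>\<Phi> k. sentence \<Phi> \<and> var_width \<Phi> = m \<and>
      (\<forall>V E. simple_graph V E \<and> two_connected V E \<and> treewidth V E \<ge> k \<longrightarrow>
         (models V E \<Phi> \<longleftrightarrow> contains_subgraph V E VF EF)))"

end

theory Submission
  imports Defs "HOL-Library.Countable" "HOL-Computational_Algebra.Primes"
begin

datatype tp = EQ | ADJ | SAME | OPP

definition tyof :: "('a \<Rightarrow> bool) \<Rightarrow> ('a \<Rightarrow> 'a \<Rightarrow> bool) \<Rightarrow> 'a \<Rightarrow> 'a \<Rightarrow> tp" where
  "tyof sd R u v = (if u = v then EQ else if R u v then ADJ else if sd u = sd v then SAME else OPP)"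

fun samep :: "tp \<Rightarrow> bool" where
  "samep EQ = True" | "samep SAME = True" | "samep ADJ = False" | "samep OPP = False"

definition realizable :: "tp \<Rightarrow> tp \<Rightarrow> tp \<Rightarrow> bool" where
  "realizable t1 t2 t0 = (if t0 = EQ then t1 = t2 else
     (t1 = EQ \<longrightarrow> t2 = t0) \<and> (t2 = EQ \<longrightarrow> t1 = t0) \<and> (samep t0 \<longleftrightarrow> (samep t1 \<longleftrightarrow> samep t2)))"

definition RICH :: "'a set \<Rightarrow> ('a \<Rightarrow> bool) \<Rightarrow> ('a \<Rightarrow> 'a \<Rightarrow> bool) \<Rightarrow> bool" where
  "RICH X sd R \<longleftrightarrow> (\<forall>u1\<in>X. \<forall>u2\<in>X. \<forall>t1 t2. realizable t1 t2 (tyof sd R u1 u2) \<longrightarrow>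
      (\<exists>z\<in>X. tyof sd R u1 z = t1 \<and> tyof sd R u2 z = t2))"

definition bip :: "('a \<Rightarrow> bool) \<Rightarrow> ('a \<Rightarrow> 'a \<Rightarrow> bool) \<Rightarrow> bool" where
  "bip sd R \<longleftrightarrow> (\<forall>u v. R u v \<longrightarrow> R v u \<and> sd u \<noteq> sd v)"

lemma typ_sym: "bip sd R \<Longrightarrow> tyof sd R u v = tyof sd R v u"
  unfolding tyof_def bip_def by auto

lemma samep_typ: "bip sd R \<Longrightarrow> samep (tyof sd R u v) \<longleftrightarrow> sd u = sd v"
  unfolding tyof_def bip_def by auto

lemma realizable_actual: "bip sd R \<Longrightarrow>
   realizable (tyof sd R u1 z) (tyof sd R u2 z) (tyof sd R u1 u2)"
proof -
  assume b: "bip sd R"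
  have s: "samep (tyof sd R u1 z) = (sd u1 = sd z)" "samep (tyof sd R u2 z) = (sd u2 = sd z)"
    "samep (tyof sd R u1 u2) = (sd u1 = sd u2)" using samep_typ[OF b] by auto
  have e1: "tyof sd R u1 z = EQ \<longleftrightarrow> u1 = z" "tyof sd R u2 z = EQ \<longleftrightarrow> u2 = z"
    "tyof sd R u1 u2 = EQ \<longleftrightarrow> u1 = u2" by (auto simp: tyof_def)
  show ?thesis
  proof (cases "u1 = u2")
    case True then show ?thesis by (simp add: realizable_def tyof_def)
  next
    case False
    have "tyof sd R u1 z = EQ \<longrightarrow> tyof sd R u2 z = tyof sd R u1 u2"
      using e1 typ_sym[OF b, of u2 u1] by auto
    moreover have "tyof sd R u2 z = EQ \<longrightarrow> tyof sd R u1 z = tyof sd R u1 u2"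
      using e1 by auto
    moreover have "samep (tyof sd R u1 u2) = (samep (tyof sd R u1 z) = samep (tyof sd R u2 z))"
      unfolding s by auto
    ultimately show ?thesis using False e1 unfolding realizable_def by auto
  qed
qed

lemma typ_EQ: "tyof sd R u v = EQ \<longleftrightarrow> u = v" unfolding tyof_def by auto
lemma typ_ADJ: "(\<forall>u. \<not> R u u) \<Longrightarrow> tyof sd R u v = ADJ \<longleftrightarrow> R u v" unfolding tyof_def by auto

lemma finite_vars: "finite (vars p)" by (induction p) auto

lemma coincide: "(\<forall>x\<in>free_vars p. a x = b x) \<Longrightarrow> sat V E a p = sat V E b p"
proof (induction p arbitrary: a b)
  case (Ex x p)
  have "sat V E (a(x:=v)) p = sat V E (b(x:=v)) p" for v
    using Ex.prems by (intro Ex.IH) auto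
  then show ?case by simp
next
  case (All x p)
  have "sat V E (a(x:=v)) p = sat V E (b(x:=v)) p" for v
    using All.prems by (intro All.IH) auto
  then show ?case by simp
next
  case (Neg p) then show ?case using Neg.IH[of a b] Neg.prems by auto
next
  case (Conj p q)
  have "sat V E a p = sat V E b p" by (rule Conj.IH(1)) (use Conj.prems in auto)
  moreover have "sat V E a q = sat V E b q" by (rule Conj.IH(2)) (use Conj.prems in auto)
  ultimately show ?case by simp
next
  case (Disj p q)
  have "sat V E a p = sat V E b p" by (rule Disj.IH(1)) (use Disj.prems in auto)
  moreover have "sat V E a q = sat V E b q" by (rule Disj.IH(2)) (use Disj.prems in auto)
  ultimately show ?case by simp
next
  case (Imp p q)
  have "sat V E a p = sat V E b p" by (rule Imp.IH(1)) (use Imp.prems in auto)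
  moreover have "sat V E a q = sat V E b q" by (rule Imp.IH(2)) (use Imp.prems in auto)
  ultimately show ?case by simp
next
  case (Iff p q)
  have "sat V E a p = sat V E b p" by (rule Iff.IH(1)) (use Iff.prems in auto)
  moreover have "sat V E a q = sat V E b q" by (rule Iff.IH(2)) (use Iff.prems in auto)
  ultimately show ?case by simp
qed auto

lemma ext_step:
  assumes "RICH V' sd' E'" "bip sd E" "V' \<noteq> {}" "bip sd' E'" and fS: "finite S" and cS: "card S \<le> 3"
    and AS: "\<forall>y\<in>S. a y \<in> V \<and> a' y \<in> V'"
    and TS: "\<forall>y\<in>S. \<forall>w\<in>S. tyof sd E (a y) (a w) = tyof sd' E' (a' y) (a' w)"
    and "v \<in> V" and xS: "x \<in> S"
  shows "\<exists>v'\<in>V'. \<forall>y\<in>S. \<forall>w\<in>S. tyof sd E ((a(x:=v)) y) ((a(x:=v)) w) = tyof sd' E' ((a'(x:=v')) y) ((a'(x:=v')) w)"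
proof -
  have cR: "card (S - {x}) \<le> 2" using assms by (simp add: card_Diff_singleton)
  have "\<exists>y1 y2. S - {x} \<subseteq> {y1, y2} \<and> (S - {x} \<noteq> {} \<longrightarrow> y1 \<in> S - {x} \<and> y2 \<in> S - {x})"
  proof (cases "S - {x} = {}")
    case True then show ?thesis by auto
  next
    case False
    then obtain y1 where y1: "y1 \<in> S - {x}" by auto
    show ?thesis
    proof (cases "S - {x} - {y1} = {}")
      case True then show ?thesis using y1 by (intro exI[of _ y1]) auto
    next
      case False
      then obtain y2 where y2: "y2 \<in> S - {x} - {y1}" by auto
      have "card {y1,y2} = 2" using y2 by auto
      moreover have "{y1,y2} \<subseteq> S - {x}" using y1 y2 by auto
      ultimately have "S - {x} = {y1,y2}" using cR fS card_seteq[of "S - {x}" "{y1,y2}"]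
        by auto
      then show ?thesis by auto
    qed
  qed
  then obtain y1 y2 where Y: "S - {x} \<subseteq> {y1, y2}" and Y2: "S - {x} \<noteq> {} \<longrightarrow> y1 \<in> S - {x} \<and> y2 \<in> S - {x}"
    by blast
  show ?thesis
  proof (cases "S - {x} = {}")
    case True
    obtain v' where v': "v' \<in> V'" using assms(3) by auto
    have "S = {x}" using True xS by auto
    then show ?thesis using v' by (intro bexI[of _ v']) (simp_all add: tyof_def)
  next
    case False
    then have y: "y1 \<in> S" "y2 \<in> S" "y1 \<noteq> x" "y2 \<noteq> x" using Y2 by auto
    have r: "realizable (tyof sd E (a y1) v) (tyof sd E (a y2) v) (tyof sd' E' (a' y1) (a' y2))"
    proof -
      have "tyof sd E (a y1) (a y2) = tyof sd' E' (a' y1) (a' y2)" using TS y by blast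
      then show ?thesis using realizable_actual[OF assms(2), of "a y1" v "a y2"] by simp
    qed
    have inV: "a' y1 \<in> V'" "a' y2 \<in> V'" using AS y by auto
    obtain z where z: "z \<in> V'" "tyof sd' E' (a' y1) z = tyof sd E (a y1) v"
        "tyof sd' E' (a' y2) z = tyof sd E (a y2) v"
    proof -
      have "\<forall>u1\<in>V'. \<forall>u2\<in>V'. \<forall>t1 t2. realizable t1 t2 (tyof sd' E' u1 u2) \<longrightarrow>
        (\<exists>z\<in>V'. tyof sd' E' u1 z = t1 \<and> tyof sd' E' u2 z = t2)" using assms(1) unfolding RICH_def .
      then have "\<exists>z\<in>V'. tyof sd' E' (a' y1) z = tyof sd E (a y1) v \<and> tyof sd' E' (a' y2) z = tyof sd E (a y2) v"
        using inV r by blast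
      then show ?thesis using that by blast
    qed
    have key: "tyof sd E (a y) v = tyof sd' E' (a' y) z" if "y \<in> S" "y \<noteq> x" for y
    proof -
      have "y = y1 \<or> y = y2" using Y that by auto
      then show ?thesis using z by auto
    qed
    show ?thesis
    proof (intro bexI[OF _ z(1)] ballI)
      fix y w assume yw: "y \<in> S" "w \<in> S"
      show "tyof sd E ((a(x := v)) y) ((a(x := v)) w) = tyof sd' E' ((a'(x := z)) y) ((a'(x := z)) w)"
      proof (cases "y = x")
        case True
        show ?thesis
        proof (cases "w = x")
          case True
          then show ?thesis using \<open>y = x\<close> by (simp add: tyof_def)
        next
          case False
          have "tyof sd E v (a w) = tyof sd' E' z (a' w)"
            using key[OF yw(2) False] typ_sym[OF assms(2), of v "a w"] typ_sym[OF assms(4), of z "a' w"] by simp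
          then show ?thesis using True False by simp
        qed
      next
        case False
        show ?thesis
        proof (cases "w = x")
          case True
          then show ?thesis using key[OF yw(1) False] False by simp
        next
          case False2: False
          then show ?thesis using False TS yw by simp
        qed
      qed
    qed
  qed
qed

lemma connected_remove_leaf:
  assumes conn: "connected_on TE S" and leaf: "\<And>x. TE t x \<Longrightarrow> x = s"
    and sym: "\<And>x y. TE x y \<Longrightarrow> TE y x"
  shows "connected_on TE (S - {t})"
proof -
  let ?R = "\<lambda>x y. x \<in> S \<and> y \<in> S \<and> TE x y"
  let ?R' = "\<lambda>x y. x \<in> S - {t} \<and> y \<in> S - {t} \<and> TE x y"
  have main: "(w \<noteq> t \<longrightarrow> ?R'\<^sup>*\<^sup>* u w) \<and> (w = t \<longrightarrow> s \<in> S \<and> s \<noteq> t \<and> ?R'\<^sup>*\<^sup>* u s)"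
    if "?R\<^sup>*\<^sup>* u w" "u \<in> S" "u \<noteq> t" for u w
    using that(1)
  proof (induction rule: rtranclp_induct)
    case base then show ?case using that by auto
  next
    case (step y z)
    have tz: "TE y z" "y \<in> S" "z \<in> S" using step by auto
    show ?case
    proof (cases "y = t")
      case True
      then have "z = s" using leaf tz by auto
      moreover have "z \<noteq> t" using True tz step.IH leaf by auto
      ultimately show ?thesis using step True by auto
    next
      case False
      show ?thesis
      proof (cases "z = t")
        case True
        then have "y = s" using leaf sym tz by blast
        then show ?thesis using False True step tz by auto
      next
        case False2: False
        have yz: "?R' y z" using False False2 tz by auto
        have "?R'\<^sup>*\<^sup>* u y" using step.IH False by auto
        then have "?R'\<^sup>*\<^sup>* u z" using yz by (rule rtranclp.rtrancl_into_rtrancl)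
        then show ?thesis using False2 by auto
      qed
    qed
  qed
  show ?thesis unfolding connected_on_def
  proof (intro ballI)
    fix u w assume "u \<in> S - {t}" "w \<in> S - {t}"
    then show "?R'\<^sup>*\<^sup>* u w" using main conn unfolding connected_on_def by blast
  qed
qed

lemma connected_on_cong:
  assumes "\<And>x y. x \<in> S \<Longrightarrow> y \<in> S \<Longrightarrow> TE x y = TE' x y"
  shows "connected_on TE S = connected_on TE' S"
proof -
  have "(\<lambda>x y. x \<in> S \<and> y \<in> S \<and> TE x y) = (\<lambda>x y. x \<in> S \<and> y \<in> S \<and> TE' x y)"
    using assms by (intro ext) auto
  then show ?thesis unfolding connected_on_def by simp
qed

lemma has_leaf:
  assumes tr: "is_tree N TE" and c2: "card N \<ge> 2"
  shows "\<exists>t\<in>N. \<exists>s\<in>N. TE t s \<and> (\<forall>x. TE t x \<longrightarrow> x = s)"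
proof -
  have sg: "simple_graph N TE" and cg: "connected_graph N TE" and nc: "\<not> has_cycle N TE"
    using tr unfolding is_tree_def by auto
  have fin: "finite N" using sg unfolding simple_graph_def by auto
  have sym: "\<And>x y. TE x y \<Longrightarrow> TE y x" and inN: "\<And>x y. TE x y \<Longrightarrow> x \<in> N \<and> y \<in> N"
    and irr: "\<And>x y. TE x y \<Longrightarrow> x \<noteq> y"
    using sg unfolding simple_graph_def by auto
  define P where "P xs \<longleftrightarrow> distinct xs \<and> set xs \<subseteq> N \<and>
     (\<forall>i. Suc i < length xs \<longrightarrow> TE (xs ! i) (xs ! Suc i))" for xs
  have Nne: "N \<noteq> {}" using c2 by auto
  then obtain u where u: "u \<in> N" by auto
  have "card (N - {u}) \<ge> 1" using c2 fin u by (simp add: card_Diff_singleton)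
  then have "N - {u} \<noteq> {}" by (cases "N - {u} = {}") auto
  then obtain w where w: "w \<in> N - {u}" by auto
  have uw: "u \<in> N" "w \<in> N" "u \<noteq> w" using u w by auto
  have "(\<lambda>x y. x \<in> N \<and> y \<in> N \<and> TE x y)\<^sup>*\<^sup>* u w"
    using cg uw unfolding connected_graph_def connected_on_def by auto
  then obtain y where y: "TE u y"
    using uw(3) by (cases rule: converse_rtranclpE) auto
  have P2: "P [u, y]" unfolding P_def using y irr inN by (auto simp: less_Suc_eq nth_Cons')
  have bnd: "length xs \<le> card N" if "P xs" for xs
    using that unfolding P_def by (metis card_mono distinct_card fin)
  obtain xs where xs: "P xs" "\<forall>ys. P ys \<longrightarrow> length ys \<le> length xs"
    using Lattices_Big.ex_has_greatest_nat[of P "[u, y]" length "Suc (card N)"] P2 bnd by (meson le_imp_less_Suc)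
  define m where "m = length xs"
  have m: "\<forall>ys. P ys \<longrightarrow> length ys \<le> m" using xs(2) unfolding m_def by blast
  have m2: "m \<ge> 2" using m P2 by fastforce
  define t where "t = xs ! 0"
  define s where "s = xs ! 1"
  have Pd: "distinct xs" "set xs \<subseteq> N" "\<And>i. Suc i < length xs \<Longrightarrow> TE (xs ! i) (xs ! Suc i)"
    using xs unfolding P_def by auto
  have ts: "TE t s" using Pd(3)[of 0] m2 unfolding t_def s_def m_def by auto
  have tN: "t \<in> N" "s \<in> N" using inN ts by auto
  have "\<forall>x. TE t x \<longrightarrow> x = s"
  proof (intro allI impI, rule ccontr)
    fix x assume tx: "TE t x" and xs_ne: "x \<noteq> s"
    show False
    proof (cases "x \<in> set xs")
      case False
      have "P (x # xs)" unfolding P_def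
      proof (intro conjI allI impI)
        show "distinct (x # xs)" using False Pd by auto
        show "set (x # xs) \<subseteq> N" using Pd inN tx by auto
        fix i assume "Suc i < length (x # xs)"
        then show "TE ((x # xs) ! i) ((x # xs) ! Suc i)"
          using Pd(3) sym tx unfolding t_def by (cases i) auto
      qed
      then have "length (x # xs) \<le> m" using m by blast
      then show False unfolding m_def by simp
    next
      case True
      then obtain j where j: "j < length xs" "xs ! j = x" by (metis in_set_conv_nth)
      have j0: "j \<noteq> 0"
      proof
        assume "j = 0"
        then have "x = t" using j unfolding t_def by simp
        then show False using irr tx by blast
      qed
      have j1: "j \<noteq> 1" using j xs_ne unfolding s_def by auto
      have "has_cycle N TE" unfolding has_cycle_def
      proof (intro exI[of _ "take (Suc j) xs"] conjI allI impI)
        show "3 \<le> length (take (Suc j) xs)" using j j0 j1 by auto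
        show "distinct (take (Suc j) xs)" using Pd by auto
        show "set (take (Suc j) xs) \<subseteq> N" using Pd by (meson order_trans set_take_subset)
        fix i assume "Suc i < length (take (Suc j) xs)"
        then show "TE (take (Suc j) xs ! i) (take (Suc j) xs ! Suc i)" using Pd(3) by auto
      next
        have "take (Suc j) xs = take j xs @ [xs ! j]" using j(1) by (simp add: take_Suc_conv_app_nth)
        then have "last (take (Suc j) xs) = x" using j by simp
        moreover have "hd (take (Suc j) xs) = t" using j(1) unfolding t_def by (cases xs) auto
        ultimately show "TE (last (take (Suc j) xs)) (hd (take (Suc j) xs))" using sym tx by auto
      qed
      then show False using nc by auto
    qed
  qed
  then show ?thesis using ts tN by blast
qed

lemma tw_bag_bound:
  assumes sg: "simple_graph V E" and ne: "V \<noteq> {}" and deg: "\<forall>v\<in>V. d \<le> card {w. E v w}"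
  shows "tree_decomposition V E N TE B \<Longrightarrow> \<exists>t\<in>N. d + 1 \<le> card (B t)"
proof (induction "card N" arbitrary: N TE B rule: less_induct)
  case less
  note td = less.prems
  have tr: "is_tree N TE" using td unfolding tree_decomposition_def by auto
  have sgN: "simple_graph N TE" and cgN: "connected_graph N TE"
    using tr unfolding is_tree_def by auto
  have finN: "finite N" using sgN unfolding simple_graph_def by auto
  have Nne: "N \<noteq> {}" using cgN unfolding connected_graph_def by auto
  have symT: "\<And>x y. TE x y \<Longrightarrow> TE y x" and inN: "\<And>x y. TE x y \<Longrightarrow> x \<in> N \<and> y \<in> N"
    and irrT: "\<And>x y. TE x y \<Longrightarrow> x \<noteq> y"
    using sgN unfolding simple_graph_def by auto
  have finV: "finite V" using sg unfolding simple_graph_def by auto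
  have BV: "\<forall>t\<in>N. B t \<subseteq> V" and cov: "\<forall>v\<in>V. \<exists>t\<in>N. v \<in> B t"
    and ecov: "\<forall>u v. E u v \<longrightarrow> (\<exists>t\<in>N. u \<in> B t \<and> v \<in> B t)"
    and sub: "\<forall>v\<in>V. connected_on TE {t \<in> N. v \<in> B t}"
    using td unfolding tree_decomposition_def by auto
  have Eirr: "\<And>v. \<not> E v v" using sg unfolding simple_graph_def by auto
  have only: "d + 1 \<le> card (B t)" if "t \<in> N" "v \<in> V" "v \<in> B t" "\<forall>t'\<in>N. v \<in> B t' \<longrightarrow> t' = t" for t v
  proof -
    have sub: "insert v {w. E v w} \<subseteq> B t"
    proof (rule subsetI)
      fix w assume w: "w \<in> insert v {w. E v w}"
      show "w \<in> B t"
      proof (cases "w = v")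
        case True then show ?thesis using that(3) by simp
      next
        case False
        then have "E v w" using w by simp
        then obtain t' where t': "t' \<in> N" "v \<in> B t'" "w \<in> B t'" using ecov by blast
        then have "t' = t" using that(4) by blast
        then show ?thesis using t' by simp
      qed
    qed
    have "B t \<subseteq> V" using BV that(1) by blast
    then have finB: "finite (B t)" using finV by (rule finite_subset)
    have c1: "card (insert v {w. E v w}) \<le> card (B t)" using card_mono[OF finB sub] .
    have "{w. E v w} \<subseteq> V" using sg unfolding simple_graph_def by auto
    then have fin': "finite {w. E v w}" using finV by (rule finite_subset)
    have "card (insert v {w. E v w}) = Suc (card {w. E v w})" using fin' Eirr by simp
    then show ?thesis using deg that(2) c1 by auto
  qed
  show ?case
  proof (cases "card N \<ge> 2")
    case False
    have "card N \<noteq> 0" using Nne finN by simp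
    then have c1: "card N = 1" using False by linarith
    obtain t where Nt: "N = {t}" using card_1_singletonE[OF c1] by blast
    obtain v where v: "v \<in> V" using ne by auto
    obtain t0 where t0: "t0 \<in> N" "v \<in> B t0" using cov v by blast
    have tt: "t0 = t" using t0(1) Nt by simp
    have all: "\<forall>t'\<in>N. v \<in> B t' \<longrightarrow> t' = t" using Nt by simp
    have "t \<in> N" using Nt by simp
    then show ?thesis using only[OF _ v _ all] t0 tt by blast
  next
    case True
    obtain t s where ts: "t \<in> N" "s \<in> N" "TE t s" "\<forall>x. TE t x \<longrightarrow> x = s"
      using has_leaf[OF tr True] by blast
    have st: "s \<noteq> t" using irrT ts(3) by blast
    show ?thesis
    proof (cases "B t \<subseteq> B s")
      case False
      then obtain v where v: "v \<in> B t" "v \<notin> B s" by auto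
      have vV: "v \<in> V" using BV ts(1) v by blast
      have "\<forall>t'\<in>N. v \<in> B t' \<longrightarrow> t' = t"
      proof (intro ballI impI, rule ccontr)
        fix t' assume t': "t' \<in> N" "v \<in> B t'" "t' \<noteq> t"
        let ?T = "{t \<in> N. v \<in> B t}"
        have c: "connected_on TE ?T" using sub vV by blast
        have tT: "t \<in> ?T" "t' \<in> ?T" using ts(1) v t' by auto
        have "\<forall>w\<in>?T. (\<lambda>x y. x \<in> ?T \<and> y \<in> ?T \<and> TE x y)\<^sup>*\<^sup>* t w"
          using c tT(1) unfolding connected_on_def by (rule bspec)
        then have "(\<lambda>x y. x \<in> ?T \<and> y \<in> ?T \<and> TE x y)\<^sup>*\<^sup>* t t'" using tT(2) by (rule bspec)
        then obtain y where "TE t y" "v \<in> B y" using t'(3)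
          by (cases rule: converse_rtranclpE) auto
        then show False using ts(4) v by blast
      qed
      then show ?thesis using only[of t v] ts(1) v vV by blast
    next
      case True
      define N' where "N' = N - {t}"
      define TE' where "TE' x y \<longleftrightarrow> TE x y \<and> x \<noteq> t \<and> y \<noteq> t" for x y
      have conn': "connected_on TE' (S - {t})" if "connected_on TE S" for S
      proof -
        have "connected_on TE (S - {t})" using connected_remove_leaf[OF that, of t s] ts symT by blast
        moreover have "connected_on TE (S - {t}) = connected_on TE' (S - {t})"
          by (rule connected_on_cong) (auto simp: TE'_def)
        ultimately show ?thesis by simp
      qed
      have "tree_decomposition V E N' TE' B"
        unfolding tree_decomposition_def is_tree_def
      proof (intro conjI ballI allI impI)
        show "simple_graph N' TE'" using sgN finN unfolding simple_graph_def N'_def TE'_def by auto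
        show "connected_graph N' TE'" unfolding connected_graph_def
        proof
          show "N' \<noteq> {}" using ts(2) st unfolding N'_def by auto
          show "connected_on TE' N'" unfolding N'_def
            by (rule conn') (use cgN in \<open>simp add: connected_graph_def\<close>)
        qed
        show "\<not> has_cycle N' TE'"
        proof
          assume "has_cycle N' TE'"
          then obtain xs where xs: "length xs \<ge> 3" "distinct xs" "set xs \<subseteq> N'"
              "\<forall>i. Suc i < length xs \<longrightarrow> TE' (xs ! i) (xs ! Suc i)" "TE' (last xs) (hd xs)"
            unfolding has_cycle_def by blast
          have "has_cycle N TE" unfolding has_cycle_def
            by (rule exI[of _ xs]) (use xs in \<open>auto simp: N'_def TE'_def\<close>)
          then show False using tr unfolding is_tree_def by auto
        qed
        show "B t' \<subseteq> V" if "t' \<in> N'" for t' using that BV unfolding N'_def by auto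
        show "\<exists>t'\<in>N'. v \<in> B t'" if vV: "v \<in> V" for v
        proof -
          obtain t' where "t' \<in> N" "v \<in> B t'" using cov vV by auto
          then show ?thesis using True ts(2) st unfolding N'_def by (cases "t' = t") auto
        qed
        show "\<exists>t'\<in>N'. u \<in> B t' \<and> v \<in> B t'" if Euv: "E u v" for u v
        proof -
          obtain t' where "t' \<in> N" "u \<in> B t'" "v \<in> B t'" using ecov Euv by blast
          then show ?thesis using True ts(2) st unfolding N'_def by (cases "t' = t") auto
        qed
        show "connected_on TE' {t' \<in> N'. v \<in> B t'}" if "v \<in> V" for v
        proof -
          have "{t' \<in> N'. v \<in> B t'} = {t' \<in> N. v \<in> B t'} - {t}" unfolding N'_def by auto
          moreover have "connected_on TE {t' \<in> N. v \<in> B t'}" using sub that by blast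
          ultimately show ?thesis using conn' by simp
        qed
      qed
      moreover have "card N' < card N" unfolding N'_def by (rule card_Diff1_less[OF finN ts(1)])
      ultimately obtain t' where "t' \<in> N'" "d + 1 \<le> card (B t')" using less.hyps[of N' TE' B] by blast
      then show ?thesis unfolding N'_def by auto
    qed
  qed
qed

lemma treewidth_ge:
  assumes sg: "simple_graph V E" and ne: "V \<noteq> {}" and deg: "\<forall>v\<in>V. d \<le> card {w. E v w}"
  shows "d \<le> treewidth V E"
proof -
  let ?P = "\<lambda>w. \<exists>N TE B. tree_decomposition V E N TE B \<and> decomp_width N B = w"
  have ex: "?P (decomp_width {0} (\<lambda>_. V))"
  proof (intro exI conjI)
    show "tree_decomposition V E {0} (\<lambda>_ _. False) (\<lambda>_. V)"
      unfolding tree_decomposition_def is_tree_def simple_graph_def connected_graph_def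
        connected_on_def has_cycle_def
      using sg unfolding simple_graph_def
      by auto
  qed simp
  have all: "d \<le> w" if "?P w" for w
  proof -
    from that obtain N TE B where td: "tree_decomposition V E N TE B" and w: "decomp_width N B = w" by blast
    obtain t where t: "t \<in> N" "d + 1 \<le> card (B t)" using tw_bag_bound[OF sg ne deg td] by blast
    have "finite N" using td unfolding tree_decomposition_def is_tree_def simple_graph_def by auto
    then have "card (B t) \<le> Max ((\<lambda>t. card (B t)) ` N)" using t by (intro Max_ge) auto
    then show ?thesis using w t unfolding decomp_width_def by linarith
  qed
  show ?thesis unfolding treewidth_def using LeastI_ex[OF exI[of ?P, OF ex]] all by blast
qed

lemma bisim:
  assumes b1: "bip sd E" and b2: "bip sd' E'" and r1: "RICH V sd E" and r2: "RICH V' sd' E'"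
    and n1: "V \<noteq> {}" and n2: "V' \<noteq> {}" and i1: "\<forall>u. \<not> E u u" and i2: "\<forall>u. \<not> E' u u"
  shows "vars p \<subseteq> S \<Longrightarrow> finite S \<Longrightarrow> card S \<le> 3 \<Longrightarrow> \<forall>y\<in>S. a y \<in> V \<and> a' y \<in> V' \<Longrightarrow>
    \<forall>y\<in>S. \<forall>w\<in>S. tyof sd E (a y) (a w) = tyof sd' E' (a' y) (a' w) \<Longrightarrow> sat V E a p = sat V' E' a' p"
proof (induction p arbitrary: a a')
  case (Adj x y)
  then have "tyof sd E (a x) (a y) = tyof sd' E' (a' x) (a' y)" by auto
  then show ?case using typ_ADJ[where R=E, OF i1] typ_ADJ[where R=E', OF i2] by (metis sat.simps(1))
next
  case (Eq x y)
  then have "tyof sd E (a x) (a y) = tyof sd' E' (a' x) (a' y)" by auto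
  then show ?case using typ_EQ by (metis sat.simps(2))
next
  case (Ex x p)
  have xS: "x \<in> S" and pS: "vars p \<subseteq> S" using Ex.prems by auto
  show ?case
  proof
    assume "sat V E a (Ex x p)"
    then obtain v where v: "v \<in> V" "sat V E (a(x:=v)) p" by auto
    obtain v' where v': "v' \<in> V'" "\<forall>y\<in>S. \<forall>w\<in>S. tyof sd E ((a(x:=v)) y) ((a(x:=v)) w) = tyof sd' E' ((a'(x:=v')) y) ((a'(x:=v')) w)"
      using ext_step[OF r2 b1 n2 b2 Ex.prems(2,3,4,5) v(1) xS] by blast
    have as': "\<forall>y\<in>S. (a(x:=v)) y \<in> V \<and> (a'(x:=v')) y \<in> V'" using v(1) v'(1) Ex.prems(4) by auto
    have "sat V E (a(x:=v)) p = sat V' E' (a'(x:=v')) p" by (rule Ex.IH[OF pS Ex.prems(2,3) as' v'(2)])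
    then have "sat V' E' (a'(x:=v')) p" using v(2) by simp
    then show "sat V' E' a' (Ex x p)" using v' by auto
  next
    assume "sat V' E' a' (Ex x p)"
    then obtain v' where v': "v' \<in> V'" "sat V' E' (a'(x:=v')) p" by auto
    have as: "\<forall>y\<in>S. a' y \<in> V' \<and> a y \<in> V" using Ex.prems(4) by auto
    have ts: "\<forall>y\<in>S. \<forall>w\<in>S. tyof sd' E' (a' y) (a' w) = tyof sd E (a y) (a w)" using Ex.prems(5) by auto
    obtain v where v: "v \<in> V" "\<forall>y\<in>S. \<forall>w\<in>S. tyof sd' E' ((a'(x:=v')) y) ((a'(x:=v')) w) = tyof sd E ((a(x:=v)) y) ((a(x:=v)) w)"
      using ext_step[OF r1 b2 n1 b1 Ex.prems(2,3) as ts v'(1) xS] by blast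
    have as': "\<forall>y\<in>S. (a(x:=v)) y \<in> V \<and> (a'(x:=v')) y \<in> V'" using v(1) v'(1) Ex.prems(4) by auto
    have ts': "\<forall>y\<in>S. \<forall>w\<in>S. tyof sd E ((a(x:=v)) y) ((a(x:=v)) w) = tyof sd' E' ((a'(x:=v')) y) ((a'(x:=v')) w)"
    proof (intro ballI)
      fix y w assume yw: "y \<in> S" "w \<in> S"
      have "tyof sd' E' ((a'(x:=v')) y) ((a'(x:=v')) w) = tyof sd E ((a(x:=v)) y) ((a(x:=v)) w)"
        using v(2) yw by blast
      then show "tyof sd E ((a(x:=v)) y) ((a(x:=v)) w) = tyof sd' E' ((a'(x:=v')) y) ((a'(x:=v')) w)" by (rule sym)
    qed
    have "sat V E (a(x:=v)) p = sat V' E' (a'(x:=v')) p" by (rule Ex.IH[OF pS Ex.prems(2,3) as' ts'])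
    then have "sat V E (a(x:=v)) p" using v'(2) by simp
    then show "sat V E a (Ex x p)" using v by auto
  qed
next
  case (All x p)
  have xS: "x \<in> S" and pS: "vars p \<subseteq> S" using All.prems by auto
  show ?case
  proof
    assume H: "sat V E a (All x p)"
    show "sat V' E' a' (All x p)"
    proof (simp, intro ballI)
      fix v' assume v'1: "v' \<in> V'"
      have as: "\<forall>y\<in>S. a' y \<in> V' \<and> a y \<in> V" using All.prems(4) by auto
      have ts: "\<forall>y\<in>S. \<forall>w\<in>S. tyof sd' E' (a' y) (a' w) = tyof sd E (a y) (a w)" using All.prems(5) by auto
      obtain v where v: "v \<in> V" "\<forall>y\<in>S. \<forall>w\<in>S. tyof sd' E' ((a'(x:=v')) y) ((a'(x:=v')) w) = tyof sd E ((a(x:=v)) y) ((a(x:=v)) w)"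
        using ext_step[OF r1 b2 n1 b1 All.prems(2,3) as ts v'1 xS] by blast
      have "sat V E (a(x:=v)) p" using H v by auto
      moreover have as': "\<forall>y\<in>S. (a(x:=v)) y \<in> V \<and> (a'(x:=v')) y \<in> V'" using v(1) v'1 All.prems(4) by auto
      moreover have ts': "\<forall>y\<in>S. \<forall>w\<in>S. tyof sd E ((a(x:=v)) y) ((a(x:=v)) w) = tyof sd' E' ((a'(x:=v')) y) ((a'(x:=v')) w)"
      proof (intro ballI)
        fix y w assume yw: "y \<in> S" "w \<in> S"
        have "tyof sd' E' ((a'(x:=v')) y) ((a'(x:=v')) w) = tyof sd E ((a(x:=v)) y) ((a(x:=v)) w)"
          using v(2) yw by blast
        then show "tyof sd E ((a(x:=v)) y) ((a(x:=v)) w) = tyof sd' E' ((a'(x:=v')) y) ((a'(x:=v')) w)" by (rule sym)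
      qed
      moreover have "sat V E (a(x:=v)) p = sat V' E' (a'(x:=v')) p" by (rule All.IH[OF pS All.prems(2,3) as' ts'])
      ultimately show "sat V' E' (a'(x:=v')) p" by blast
    qed
  next
    assume H: "sat V' E' a' (All x p)"
    show "sat V E a (All x p)"
    proof (simp, intro ballI)
      fix v assume v1: "v \<in> V"
      obtain v' where v': "v' \<in> V'" "\<forall>y\<in>S. \<forall>w\<in>S. tyof sd E ((a(x:=v)) y) ((a(x:=v)) w) = tyof sd' E' ((a'(x:=v')) y) ((a'(x:=v')) w)"
        using ext_step[OF r2 b1 n2 b2 All.prems(2,3,4,5) v1 xS] by blast
      have "sat V' E' (a'(x:=v')) p" using H v' by auto
      moreover have as': "\<forall>y\<in>S. (a(x:=v)) y \<in> V \<and> (a'(x:=v')) y \<in> V'" using v1 v'(1) All.prems(4) by auto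
      moreover have "sat V E (a(x:=v)) p = sat V' E' (a'(x:=v')) p" by (rule All.IH[OF pS All.prems(2,3) as' v'(2)])
      ultimately show "sat V E (a(x:=v)) p" by blast
    qed
  qed
qed auto

lemma models_equiv:
  assumes b1: "bip sd E" and b2: "bip sd' E'" and r1: "RICH V sd E" and r2: "RICH V' sd' E'"
    and n1: "V \<noteq> {}" and n2: "V' \<noteq> {}" and i1: "\<forall>u. \<not> E u u" and i2: "\<forall>u. \<not> E' u u"
    and sp: "sentence p" and vw: "var_width p \<le> 3"
  shows "models V E p \<longleftrightarrow> models V' E' p"
proof -
  obtain v0 v0' where v: "v0 \<in> V" "v0' \<in> V'" using n1 n2 by auto
  have m1: "models V E p \<longleftrightarrow> sat V E (\<lambda>_. v0) p"
    unfolding models_def using coincide[of p] sp unfolding sentence_def by blast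
  have m2: "models V' E' p \<longleftrightarrow> sat V' E' (\<lambda>_. v0') p"
    unfolding models_def using coincide[of p] sp unfolding sentence_def by blast
  have "sat V E (\<lambda>_. v0) p = sat V' E' (\<lambda>_. v0') p"
    using bisim[OF assms(1-8), of p "vars p" "\<lambda>_. v0" "\<lambda>_. v0'"] v vw finite_vars
    unfolding var_width_def by (auto simp: tyof_def)
  then show ?thesis using m1 m2 by simp
qed

definition reach :: "(nat \<Rightarrow> nat \<Rightarrow> bool) \<Rightarrow> nat set \<Rightarrow> nat \<Rightarrow> nat \<Rightarrow> bool" where
  "reach E S = (\<lambda>x y. x \<in> S \<and> y \<in> S \<and> E x y)\<^sup>*\<^sup>*"

lemma reach_edge: "x \<in> S \<Longrightarrow> y \<in> S \<Longrightarrow> E x y \<Longrightarrow> reach E S x y"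
  unfolding reach_def by auto

lemma reach_trans: "reach E S x y \<Longrightarrow> reach E S y z \<Longrightarrow> reach E S x z"
  unfolding reach_def by auto

lemma two_conn:
  assumes sg: "simple_graph V E" and bp: "bip sd E" and ri: "RICH V sd E" and ne: "V \<noteq> {}"
  shows "two_connected V E"
proof -
  let ?t = "tyof sd E"
  have irr: "\<forall>u. \<not> E u u" using sg unfolding simple_graph_def by auto
  have R: "\<exists>z\<in>V. ?t u1 z = t1 \<and> ?t u2 z = t2" if "u1 \<in> V" "u2 \<in> V" "realizable t1 t2 (?t u1 u2)" for u1 u2 t1 t2
    using ri that unfolding RICH_def by blast
  have symt: "?t u v = ?t v u" for u v using typ_sym[OF bp] .
  have adjE: "E u v" if "?t u v = ADJ" for u v using that typ_ADJ[where R=E, OF irr] by blast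
  have inV: "u \<in> V \<and> v \<in> V" if "E u v" for u v using sg that unfolding simple_graph_def by auto
  have sd_s: "sd u = sd v" if "?t u v = SAME" for u v using that samep_typ[OF bp, of u v] by auto
  have mkS: "?t u v = SAME" if "sd u = sd v" "u \<noteq> v" for u v
    using that samep_typ[OF bp, of u v] by (cases "?t u v") (auto simp: tyof_def split: if_splits)
  have same_case: "reach E (V - {x}) u w" if uw: "u \<in> V" "w \<in> V" "?t u w = SAME" "u \<noteq> x" "w \<noteq> x" for u w x
  proof -
    obtain z where z: "z \<in> V" "?t u z = ADJ" "?t w z = ADJ"
      using R[OF uw(1,2), of ADJ ADJ] uw(3) by (auto simp: realizable_def)
    show ?thesis
    proof (cases "z = x")
      case False
      have "?t z w = ADJ" using z(3) symt[of z w] by simp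
      then have "E u z" "E z w" using z(2) adjE by blast+
      then have "reach E (V - {x}) u z" "reach E (V - {x}) z w" using z(1) uw False by (auto intro!: reach_edge)
      then show ?thesis by (rule reach_trans)
    next
      case True
      obtain y where y: "y \<in> V" "?t u y = SAME" "?t x y = OPP"
        using R[OF uw(1) z(1), of SAME OPP] z True by (auto simp: realizable_def)
      have yx: "y \<noteq> x" using y(3) by (auto simp: tyof_def)
      have txw: "?t x w = ADJ" using z(3) True symt[of w x] by simp
      have yw: "y \<noteq> w"
      proof
        assume "y = w" then show False using txw y(3) by simp
      qed
      have tyw: "?t y w = SAME" using mkS[OF _ yw] sd_s[OF y(2)] sd_s[OF uw(3)] by simp
      obtain z1 where z1: "z1 \<in> V" "?t u z1 = ADJ" "?t y z1 = ADJ"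
        using R[OF uw(1) y(1), of ADJ ADJ] y by (auto simp: realizable_def)
      obtain z2 where z2: "z2 \<in> V" "?t y z2 = ADJ" "?t w z2 = ADJ"
        using R[OF y(1) uw(2), of ADJ ADJ] tyw by (auto simp: realizable_def)
      have z1x: "z1 \<noteq> x"
      proof
        assume "z1 = x" then have "?t x y = ADJ" using z1(3) symt[of y x] by simp
        then show False using y(3) by simp
      qed
      have z2x: "z2 \<noteq> x"
      proof
        assume "z2 = x" then have "?t x y = ADJ" using z2(2) symt[of y x] by simp
        then show False using y(3) by simp
      qed
      have e1: "E u z1" using adjE z1(2) by blast
      have e2: "E z1 y" using adjE[of z1 y] z1(3) symt[of z1 y] by simp
      have e3: "E y z2" using adjE z2(2) by blast
      have e4: "E z2 w" using adjE[of z2 w] z2(3) symt[of z2 w] by simp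
      have "reach E (V - {x}) u z1" using e1 uw z1 z1x by (auto intro!: reach_edge)
      moreover have "reach E (V - {x}) z1 y" using e2 y z1 z1x yx by (auto intro!: reach_edge)
      moreover have "reach E (V - {x}) y z2" using e3 y z2 z2x yx by (auto intro!: reach_edge)
      moreover have "reach E (V - {x}) z2 w" using e4 uw z2 z2x by (auto intro!: reach_edge)
      ultimately show ?thesis by (meson reach_trans)
    qed
  qed
  have gen: "reach E (V - {x}) u w" if uw: "u \<in> V" "w \<in> V" "u \<noteq> x" "w \<noteq> x" for u w x
  proof (cases "?t u w")
    case EQ then show ?thesis using typ_EQ[of sd E u w] unfolding reach_def by auto
  next
    case ADJ
    then have "E u w" using adjE by blast
    then show ?thesis using uw by (auto intro!: reach_edge)
  next
    case SAME then show ?thesis using same_case uw by blast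
  next
    case OPP
    obtain z where z: "z \<in> V" "?t u z = ADJ" "?t w z = SAME"
      using R[OF uw(1,2), of ADJ SAME] OPP by (auto simp: realizable_def)
    obtain y where y: "y \<in> V" "?t u y = SAME" "?t w y = ADJ"
      using R[OF uw(1,2), of SAME ADJ] OPP by (auto simp: realizable_def)
    show ?thesis
    proof (cases "z = x")
      case False
      have "E u z" using adjE z(2) by blast
      then have "reach E (V - {x}) u z" using z uw False by (auto intro!: reach_edge)
      moreover have "reach E (V - {x}) z w"
        using same_case[OF z(1) uw(2) _ False uw(4)] z(3) symt[of z w] by simp
      ultimately show ?thesis by (rule reach_trans)
    next
      case True
      have yz: "y \<noteq> z"
      proof
        assume "y = z" then show False using z(2) y(2) by simp
      qed
      then have yx: "y \<noteq> x" using True by simp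
      have "reach E (V - {x}) u y" using same_case[OF uw(1) y(1) y(2) uw(3) yx] .
      moreover have "reach E (V - {x}) y w"
        using adjE[of y w] y(3) symt[of y w] y uw yx by (auto intro!: reach_edge)
      ultimately show ?thesis by (rule reach_trans)
    qed
  qed
  obtain v0 where v0: "v0 \<in> V" using ne by auto
  have r1: "realizable SAME SAME (?t v0 v0)" by (simp add: realizable_def tyof_def)
  have r2: "realizable OPP OPP (?t v0 v0)" by (simp add: realizable_def tyof_def)
  obtain z1 where z1: "z1 \<in> V" "?t v0 z1 = SAME" using R[OF v0 v0 r1] by blast
  obtain z2 where z2: "z2 \<in> V" "?t v0 z2 = OPP" using R[OF v0 v0 r2] by blast
  have d1: "v0 \<noteq> z1"
  proof
    assume "v0 = z1" then have "?t v0 z1 = EQ" by (simp add: tyof_def)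
    then show False using z1(2) by simp
  qed
  have d2: "v0 \<noteq> z2"
  proof
    assume "v0 = z2" then have "?t v0 z2 = EQ" by (simp add: tyof_def)
    then show False using z2(2) by simp
  qed
  have d3: "z1 \<noteq> z2"
  proof
    assume "z1 = z2" then show False using z1(2) z2(2) by simp
  qed
  have finV: "finite V" using sg unfolding simple_graph_def by auto
  have c3: "card {v0, z1, z2} = 3" using d1 d2 d3 by simp
  have "{v0, z1, z2} \<subseteq> V" using v0 z1 z2 by blast
  then have "card {v0, z1, z2} \<le> card V" by (rule card_mono[OF finV])
  then have c: "card V > 2" using c3 by linarith
  have conS: "connected_on E (V - {x})" for x
    unfolding connected_on_def
  proof (intro ballI)
    fix u w assume uw: "u \<in> V - {x}" "w \<in> V - {x}"
    have "reach E (V - {x}) u w" using gen[of u w x] uw by blast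
    then show "(\<lambda>a b. a \<in> V - {x} \<and> b \<in> V - {x} \<and> E a b)\<^sup>*\<^sup>* u w" unfolding reach_def .
  qed
  obtain x0 where x0: "x0 \<notin> V" using finV ex_new_if_finite[OF infinite_UNIV_nat] by blast
  have "V - {x0} = V" using x0 by blast
  then have conV: "connected_on E V" using conS[of x0] by simp
  have conVv: "connected_graph (V - {v}) E" if vV: "v \<in> V" for v
  proof -
    have "card (V - {v}) > 1" using c vV finV by (simp add: card_Diff_singleton)
    then have "V - {v} \<noteq> {}" by (cases "V - {v} = {}") auto
    then show ?thesis unfolding connected_graph_def using conS by blast
  qed
  have "connected_graph V E" unfolding connected_graph_def using conV ne by blast
  then show ?thesis unfolding two_connected_def using c conVv by blast
qed

definition Phi4 :: fo where
  "Phi4 = Ex 0 (Ex 1 (Ex 2 (Ex 3 (Conj (Conj (Neg (Eq 0 2)) (Neg (Eq 1 3)))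
     (Conj (Adj 0 1) (Conj (Adj 1 2) (Conj (Adj 2 3) (Adj 3 0))))))))"

lemma Phi4_sentence: "sentence Phi4" unfolding sentence_def Phi4_def by auto
lemma Phi4_width: "var_width Phi4 = 4"
proof -
  have "vars Phi4 = {0,1,2,3}" unfolding Phi4_def by auto
  then show ?thesis unfolding var_width_def by simp
qed

lemma Phi4_iff:
  assumes sg: "simple_graph V E"
  shows "models V E Phi4 \<longleftrightarrow> contains_subgraph V E C4_V C4_E"
proof -
  have irr: "\<And>u. \<not> E u u" using sg unfolding simple_graph_def by auto
  have "models V E Phi4 \<longleftrightarrow> (\<exists>v0\<in>V. \<exists>v1\<in>V. \<exists>v2\<in>V. \<exists>v3\<in>V. v0 \<noteq> v2 \<and> v1 \<noteq> v3 \<and>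
      E v0 v1 \<and> E v1 v2 \<and> E v2 v3 \<and> E v3 v0)"
    unfolding models_def Phi4_def by simp
  also have "\<dots> \<longleftrightarrow> contains_subgraph V E C4_V C4_E"
  proof
    assume "\<exists>v0\<in>V. \<exists>v1\<in>V. \<exists>v2\<in>V. \<exists>v3\<in>V. v0 \<noteq> v2 \<and> v1 \<noteq> v3 \<and> E v0 v1 \<and> E v1 v2 \<and> E v2 v3 \<and> E v3 v0"
    then obtain v0 v1 v2 v3 where v: "v0 \<in> V" "v1 \<in> V" "v2 \<in> V" "v3 \<in> V" "v0 \<noteq> v2" "v1 \<noteq> v3"
      "E v0 v1" "E v1 v2" "E v2 v3" "E v3 v0" by blast
    have d: "v0 \<noteq> v1" "v1 \<noteq> v2" "v2 \<noteq> v3" "v3 \<noteq> v0" using v irr by auto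
    define f where "f i = (if i = 0 then v0 else if i = 1 then v1 else if i = 2 then v2 else v3)" for i :: nat
    have sym: "E v1 v0" "E v2 v1" "E v3 v2" "E v0 v3" using v sg unfolding simple_graph_def by auto
    show "contains_subgraph V E C4_V C4_E" unfolding contains_subgraph_def
    proof (intro exI[of _ f] conjI)
      show "inj_on f C4_V" unfolding inj_on_def C4_V_def f_def using d v by auto
      show "f ` C4_V \<subseteq> V" unfolding C4_V_def f_def using v by auto
      show "\<forall>u\<in>C4_V. \<forall>w\<in>C4_V. C4_E u w \<longrightarrow> E (f u) (f w)"
        unfolding C4_V_def C4_E_def f_def using v sym by auto
    qed
  next
    assume "contains_subgraph V E C4_V C4_E"
    then obtain f where f: "inj_on f C4_V" "f ` C4_V \<subseteq> V" "\<forall>u\<in>C4_V. \<forall>w\<in>C4_V. C4_E u w \<longrightarrow> E (f u) (f w)"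
      unfolding contains_subgraph_def by blast
    have in4: "(0::nat) \<in> C4_V" "(1::nat) \<in> C4_V" "(2::nat) \<in> C4_V" "(3::nat) \<in> C4_V" unfolding C4_V_def by auto
    have "E (f 0) (f 1)" "E (f 1) (f 2)" "E (f 2) (f 3)" "E (f 3) (f 0)"
      using f(3) in4 unfolding C4_E_def by (auto simp: C4_V_def)
    moreover have "f 0 \<noteq> f 2" "f 1 \<noteq> f 3" using inj_onD[OF f(1), of 0 2] inj_onD[OF f(1), of 1 3] in4 by auto
    moreover have "f 0 \<in> V" "f 1 \<in> V" "f 2 \<in> V" "f 3 \<in> V" using f(2) in4 by auto
    ultimately show "\<exists>v0\<in>V. \<exists>v1\<in>V. \<exists>v2\<in>V. \<exists>v3\<in>V. v0 \<noteq> v2 \<and> v1 \<noteq> v3 \<and> E v0 v1 \<and> E v1 v2 \<and> E v2 v3 \<and> E v3 v0"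
      by blast
  qed
  finally show ?thesis .
qed

definition imgE :: "'a::countable set \<Rightarrow> ('a \<Rightarrow> 'a \<Rightarrow> bool) \<Rightarrow> nat \<Rightarrow> nat \<Rightarrow> bool" where
  "imgE X R u v \<longleftrightarrow> (\<exists>x\<in>X. \<exists>y\<in>X. u = to_nat x \<and> v = to_nat y \<and> R x y)"

definition imgS :: "('a::countable \<Rightarrow> bool) \<Rightarrow> nat \<Rightarrow> bool" where
  "imgS sd u = sd (from_nat u)"

definition ABS :: "'a set \<Rightarrow> ('a \<Rightarrow> bool) \<Rightarrow> ('a \<Rightarrow> 'a \<Rightarrow> bool) \<Rightarrow> nat \<Rightarrow> bool" where
  "ABS X sd R d \<longleftrightarrow> finite X \<and> X \<noteq> {} \<and> (\<forall>x y. R x y \<longrightarrow> x \<in> X \<and> y \<in> X \<and> R y x \<and> sd x \<noteq> sd y)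
     \<and> RICH X sd R \<and> (\<forall>x\<in>X. d \<le> card {y. R x y})"

definition hasC4 :: "'a set \<Rightarrow> ('a \<Rightarrow> 'a \<Rightarrow> bool) \<Rightarrow> bool" where
  "hasC4 X R \<longleftrightarrow> (\<exists>a\<in>X. \<exists>b\<in>X. \<exists>c\<in>X. \<exists>e\<in>X. a \<noteq> c \<and> b \<noteq> e \<and> R a b \<and> R b c \<and> R c e \<and> R e a)"

lemma imgE_iff: "x \<in> X \<Longrightarrow> y \<in> X \<Longrightarrow> imgE X R (to_nat x) (to_nat y) \<longleftrightarrow> R x y"
  unfolding imgE_def by auto

lemma imgE_D: "imgE X R u v \<Longrightarrow> \<exists>x\<in>X. \<exists>y\<in>X. u = to_nat x \<and> v = to_nat y \<and> R x y"
  unfolding imgE_def by auto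

lemma C4_iff:
  assumes sg: "simple_graph V E"
  shows "contains_subgraph V E C4_V C4_E \<longleftrightarrow> (\<exists>v0\<in>V. \<exists>v1\<in>V. \<exists>v2\<in>V. \<exists>v3\<in>V. v0 \<noteq> v2 \<and> v1 \<noteq> v3 \<and>
      E v0 v1 \<and> E v1 v2 \<and> E v2 v3 \<and> E v3 v0)"
proof -
  have "models V E Phi4 \<longleftrightarrow> (\<exists>v0\<in>V. \<exists>v1\<in>V. \<exists>v2\<in>V. \<exists>v3\<in>V. v0 \<noteq> v2 \<and> v1 \<noteq> v3 \<and>
      E v0 v1 \<and> E v1 v2 \<and> E v2 v3 \<and> E v3 v0)"
    unfolding models_def Phi4_def by simp
  then show ?thesis using Phi4_iff[OF sg] by simp
qed

lemma transfer:
  fixes X :: "'a::countable set"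
  assumes A: "ABS X sd R d"
  defines "V \<equiv> to_nat ` X" and "E \<equiv> imgE X R"
  shows "simple_graph V E" "bip (imgS sd) E" "RICH V (imgS sd) E" "V \<noteq> {}"
    "\<forall>v\<in>V. d \<le> card {w. E v w}"
    "contains_subgraph V E C4_V C4_E \<longleftrightarrow> hasC4 X R"
proof -
  have fin: "finite X" and ne: "X \<noteq> {}" and Rp: "\<And>x y. R x y \<Longrightarrow> x \<in> X \<and> y \<in> X \<and> R y x \<and> sd x \<noteq> sd y"
    and ri: "RICH X sd R" and dg: "\<forall>x\<in>X. d \<le> card {y. R x y}"
    using A unfolding ABS_def by auto
  show sg: "simple_graph V E" unfolding simple_graph_def V_def E_def
  proof (intro conjI allI impI)
    show "finite (to_nat ` X)" using fin by simp
    fix u v assume "imgE X R u v"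
    then obtain x y where xy: "x \<in> X" "y \<in> X" "u = to_nat x" "v = to_nat y" "R x y" using imgE_D by blast
    then have "x \<noteq> y" using Rp by blast
    then show "u \<in> to_nat ` X" "v \<in> to_nat ` X" "u \<noteq> v" "imgE X R v u"
      using xy Rp imgE_iff[of y X x R] by auto
  qed
  show "bip (imgS sd) E" unfolding bip_def E_def
  proof (intro allI impI)
    fix u v assume "imgE X R u v"
    then obtain x y where xy: "x \<in> X" "y \<in> X" "u = to_nat x" "v = to_nat y" "R x y" using imgE_D by blast
    then show "imgE X R v u \<and> imgS sd u \<noteq> imgS sd v"
      using Rp imgE_iff[of y X x R] unfolding imgS_def by auto
  qed
  have ty: "tyof (imgS sd) E (to_nat x) (to_nat y) = tyof sd R x y" if "x \<in> X" "y \<in> X" for x y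
    using that imgE_iff[of x X y R] unfolding tyof_def imgS_def E_def by simp
  show "RICH V (imgS sd) E" unfolding RICH_def
  proof (intro ballI allI impI)
    fix u1 u2 t1 t2 assume u: "u1 \<in> V" "u2 \<in> V" and r: "realizable t1 t2 (tyof (imgS sd) E u1 u2)"
    obtain x1 x2 where x: "x1 \<in> X" "x2 \<in> X" "u1 = to_nat x1" "u2 = to_nat x2" using u unfolding V_def by blast
    have "realizable t1 t2 (tyof sd R x1 x2)" using r ty x by simp
    then obtain z where z: "z \<in> X" "tyof sd R x1 z = t1" "tyof sd R x2 z = t2"
      using ri x unfolding RICH_def by blast
    show "\<exists>z\<in>V. tyof (imgS sd) E u1 z = t1 \<and> tyof (imgS sd) E u2 z = t2"
      using z x ty unfolding V_def by auto
  qed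
  show "V \<noteq> {}" using ne unfolding V_def by auto
  show "\<forall>v\<in>V. d \<le> card {w. E v w}"
  proof
    fix v assume "v \<in> V"
    then obtain x where x: "x \<in> X" "v = to_nat x" unfolding V_def by blast
    have "{w. E v w} = to_nat ` {y. R x y}"
    proof
      show "{w. E v w} \<subseteq> to_nat ` {y. R x y}"
      proof
        fix w assume "w \<in> {w. E v w}"
        then obtain x' y where "x' \<in> X" "y \<in> X" "v = to_nat x'" "w = to_nat y" "R x' y"
          unfolding E_def using imgE_D by blast
        then show "w \<in> to_nat ` {y. R x y}" using x by auto
      qed
      show "to_nat ` {y. R x y} \<subseteq> {w. E v w}"
        using x Rp imgE_iff[of x X _ R] unfolding E_def by auto
    qed
    moreover have "card (to_nat ` {y. R x y}) = card {y. R x y}"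
      by (rule card_image) simp
    ultimately show "d \<le> card {w. E v w}" using dg x by simp
  qed
  show "contains_subgraph V E C4_V C4_E \<longleftrightarrow> hasC4 X R"
  proof
    assume "contains_subgraph V E C4_V C4_E"
    then obtain v0 v1 v2 v3 where v: "v0 \<in> V" "v1 \<in> V" "v2 \<in> V" "v3 \<in> V" "v0 \<noteq> v2" "v1 \<noteq> v3"
      "E v0 v1" "E v1 v2" "E v2 v3" "E v3 v0" using C4_iff[OF sg] by blast
    from v(1) obtain a where a: "a \<in> X" "v0 = to_nat a" unfolding V_def by blast
    from v(2) obtain b where b: "b \<in> X" "v1 = to_nat b" unfolding V_def by blast
    from v(3) obtain c where c: "c \<in> X" "v2 = to_nat c" unfolding V_def by blast
    from v(4) obtain e where e: "e \<in> X" "v3 = to_nat e" unfolding V_def by blast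
    have "R a b" "R b c" "R c e" "R e a" using v(7-10) a b c e imgE_iff[of _ X _ R] unfolding E_def by auto
    moreover have "a \<noteq> c" "b \<noteq> e" using v(5,6) a b c e by auto
    ultimately show "hasC4 X R" unfolding hasC4_def using a b c e by blast
  next
    assume "hasC4 X R"
    then obtain a b c e where H: "a \<in> X" "b \<in> X" "c \<in> X" "e \<in> X" "a \<noteq> c" "b \<noteq> e" "R a b" "R b c" "R c e" "R e a"
      unfolding hasC4_def by blast
    have "E (to_nat a) (to_nat b)" "E (to_nat b) (to_nat c)" "E (to_nat c) (to_nat e)"
      "E (to_nat e) (to_nat a)" using H imgE_iff[of _ X _ R] unfolding E_def by auto
    moreover have "to_nat a \<noteq> to_nat c" "to_nat b \<noteq> to_nat e" using H by auto
    moreover have "to_nat a \<in> V" "to_nat b \<in> V" "to_nat c \<in> V" "to_nat e \<in> V"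
      using H unfolding V_def by auto
    ultimately show "contains_subgraph V E C4_V C4_E" unfolding C4_iff[OF sg] by blast
  qed
qed

definition XG :: "nat \<Rightarrow> (bool \<times> nat \<times> nat) set" where
  "XG n = {(s, a, b). a < n \<and> b < n}"

definition RG :: "nat \<Rightarrow> bool \<times> nat \<times> nat \<Rightarrow> bool \<times> nat \<times> nat \<Rightarrow> bool" where
  "RG n x y \<longleftrightarrow> x \<in> XG n \<and> y \<in> XG n \<and> fst x \<noteq> fst y \<and> fst (snd x) \<noteq> fst (snd y) \<and> snd (snd x) \<noteq> snd (snd y)"

lemma TG: "tyof fst (RG n) (s1, a1, b1) (s2, a2, b2) =
  (if (s1, a1, b1) = (s2, a2, b2) then EQ
   else if a1 < n \<and> b1 < n \<and> a2 < n \<and> b2 < n \<and> s1 \<noteq> s2 \<and> a1 \<noteq> a2 \<and> b1 \<noteq> b2 then ADJ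
   else if s1 = s2 then SAME else OPP)"
  unfolding tyof_def RG_def XG_def by auto

lemma bipG: "bip fst (RG n)" unfolding bip_def RG_def by auto

lemma avoid2: "3 \<le> n \<Longrightarrow> \<exists>c<n. c \<noteq> p \<and> c \<noteq> (q::nat)"
proof -
  assume "3 \<le> n"
  have "\<exists>c::nat. c < 3 \<and> c \<noteq> p \<and> c \<noteq> q" by presburger
  then show ?thesis using \<open>3 \<le> n\<close> by (meson less_le_trans)
qed

lemma G_rich:
  assumes n: "5 \<le> n"
  shows "RICH (XG n) fst (RG n)"
  unfolding RICH_def
proof (intro ballI allI impI)
  fix x y t1 t2 assume x: "x \<in> XG n" and y: "y \<in> XG n"
    and r: "realizable t1 t2 (tyof fst (RG n) x y)"
  obtain s a b where xe: "x = (s, a, b)" by (cases x) auto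
  obtain s' a' b' where ye: "y = (s', a', b')" by (cases y) auto
  have ab: "a < n" "b < n" "a' < n" "b' < n" using x y xe ye by (auto simp: XG_def)
  obtain c where c: "c < n" "c \<noteq> a" "c \<noteq> a'" using avoid2[of n a a'] n by auto
  obtain d where d: "d < n" "d \<noteq> b" "d \<noteq> b'" using avoid2[of n b b'] n by auto
  let ?T = "tyof fst (RG n)"
  have inX: "(u, v, w) \<in> XG n" if "v < n" "w < n" for u v w using that by (simp add: XG_def)
  have sym: "?T u v = ?T v u" for u v using typ_sym[OF bipG] .
  have EQx: "?T x x = EQ" "?T y y = EQ" by (simp_all add: tyof_def)
  show "\<exists>z\<in>XG n. ?T x z = t1 \<and> ?T y z = t2"
  proof (cases "x = y")
    case True
    have yx: "y = (s, a, b)" using True xe by simp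
    have t0: "?T x y = EQ" using True by (simp add: tyof_def)
    then have tt: "t1 = t2" using r by (simp add: realizable_def)
    have w1: "\<exists>z\<in>XG n. ?T x z = ADJ \<and> ?T y z = ADJ"
      by (rule bexI[of _ "(\<not> s, c, d)"]) (use yx xe ab c d in \<open>simp_all add: TG inX\<close>)
    have w2: "\<exists>z\<in>XG n. ?T x z = SAME \<and> ?T y z = SAME"
      by (rule bexI[of _ "(s, c, b)"]) (use yx xe ab c d in \<open>simp_all add: TG inX\<close>)
    have w3: "\<exists>z\<in>XG n. ?T x z = OPP \<and> ?T y z = OPP"
      by (rule bexI[of _ "(\<not> s, a, b)"]) (use yx xe ab c d in \<open>simp_all add: TG inX\<close>)
    have w0: "\<exists>z\<in>XG n. ?T x z = EQ \<and> ?T y z = EQ" using x True EQx by auto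
    show ?thesis using tt w0 w1 w2 w3 by (cases t1) auto
  next
    case False
    show ?thesis
    proof (cases "s = s'")
      case True
      have t0: "?T x y = SAME" using False True xe ye by (simp add: TG)
      have w1: "\<exists>z\<in>XG n. ?T x z = ADJ \<and> ?T y z = ADJ"
        by (rule bexI[of _ "(\<not> s, c, d)"]) (use True xe ye ab c d in \<open>simp_all add: TG inX\<close>)
      have w2: "\<exists>z\<in>XG n. ?T x z = SAME \<and> ?T y z = SAME"
        by (rule bexI[of _ "(s, c, d)"]) (use True xe ye ab c d in \<open>simp_all add: TG inX\<close>)
      have w3: "\<exists>z\<in>XG n. ?T x z = OPP \<and> ?T y z = OPP"
        by (rule bexI[of _ "(\<not> s, a, b')"]) (use True xe ye ab c d in \<open>simp_all add: TG inX\<close>)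
      have w4: "\<exists>z\<in>XG n. ?T x z = ADJ \<and> ?T y z = OPP"
      proof (cases "a = a'")
        case False then show ?thesis
          by (intro bexI[of _ "(\<not> s, a', d)"]) (use True xe ye ab c d in \<open>simp_all add: TG inX\<close>)
      next
        case aa: True
        then have "b \<noteq> b'" using \<open>x \<noteq> y\<close> True xe ye by auto
        then show ?thesis
          by (intro bexI[of _ "(\<not> s, c, b')"]) (use True aa xe ye ab c d in \<open>simp_all add: TG inX\<close>)
      qed
      have w5: "\<exists>z\<in>XG n. ?T x z = OPP \<and> ?T y z = ADJ"
      proof (cases "a = a'")
        case False then show ?thesis
          by (intro bexI[of _ "(\<not> s, a, d)"]) (use True xe ye ab c d in \<open>simp_all add: TG inX\<close>)
      next
        case aa: True
        then have "b \<noteq> b'" using \<open>x \<noteq> y\<close> True xe ye by auto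
        then show ?thesis
          by (intro bexI[of _ "(\<not> s, c, b)"]) (use True aa xe ye ab c d in \<open>simp_all add: TG inX\<close>)
      qed
      have w6: "\<exists>z\<in>XG n. ?T x z = EQ \<and> ?T y z = SAME" using x EQx t0 sym[of y x] by auto
      have w7: "\<exists>z\<in>XG n. ?T x z = SAME \<and> ?T y z = EQ" using y EQx t0 by auto
      show ?thesis using r t0 w1 w2 w3 w4 w5 w6 w7
        by (cases t1; cases t2) (simp_all add: realizable_def)
    next
      case False
      define t0 where "t0 = ?T x y"
      have t0c: "t0 = ADJ \<or> t0 = OPP" using False xe ye unfolding t0_def by (simp add: TG)
      have w1: "\<exists>z\<in>XG n. ?T x z = SAME \<and> ?T y z = ADJ"
        by (rule bexI[of _ "(s, c, d)"]) (use False xe ye ab c d in \<open>simp_all add: TG inX\<close>)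
      have w2: "\<exists>z\<in>XG n. ?T x z = SAME \<and> ?T y z = OPP"
        by (rule bexI[of _ "(s, a', d)"]) (use False xe ye ab c d in \<open>simp_all add: TG inX\<close>)
      have w3: "\<exists>z\<in>XG n. ?T x z = ADJ \<and> ?T y z = SAME"
        by (rule bexI[of _ "(s', c, d)"]) (use False xe ye ab c d in \<open>simp_all add: TG inX\<close>)
      have w4: "\<exists>z\<in>XG n. ?T x z = OPP \<and> ?T y z = SAME"
        by (rule bexI[of _ "(s', a, d)"]) (use False xe ye ab c d in \<open>simp_all add: TG inX\<close>)
      have w6: "\<exists>z\<in>XG n. ?T x z = EQ \<and> ?T y z = t0" using x EQx sym[of y x] unfolding t0_def by auto
      have w7: "\<exists>z\<in>XG n. ?T x z = t0 \<and> ?T y z = EQ" using y EQx unfolding t0_def by auto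
      have r': "realizable t1 t2 t0" using r unfolding t0_def .
      show ?thesis using r' t0c w1 w2 w3 w4 w6 w7
        by (cases t1; cases t2) (auto simp: realizable_def)
    qed
  qed
qed

lemma G_ABS:
  assumes n: "5 \<le> n" "d + 2 \<le> n"
  shows "ABS (XG n) fst (RG n) d" "hasC4 (XG n) (RG n)"
proof -
  have fin: "finite (XG n)"
  proof -
    have "XG n \<subseteq> UNIV \<times> {..<n} \<times> {..<n}" unfolding XG_def by auto
    then show ?thesis by (rule finite_subset) simp
  qed
  have deg: "d \<le> card {y. RG n x y}" if x: "x \<in> XG n" for x
  proof -
    obtain s a b where xe: "x = (s, a, b)" by (cases x) auto
    let ?f = "\<lambda>c. (\<not> s, c, c)"
    have sub: "?f ` ({..<n} - {a, b}) \<subseteq> {y. RG n x y}"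
      using x xe unfolding RG_def XG_def by auto
    have fin2: "finite {y. RG n x y}"
      using fin by (rule finite_subset[rotated]) (auto simp: RG_def)
    have "card (?f ` ({..<n} - {a, b})) = card ({..<n} - {a, b})"
      by (rule card_image) (auto simp: inj_on_def)
    moreover have "card ({..<n} - {a, b}) \<ge> n - 2"
    proof -
      have "card ({..<n} - {a, b}) \<ge> card {..<n} - card {a, b}" by (rule diff_card_le_card_Diff) simp
      moreover have "card {a, b} \<le> 2" by (simp add: card_insert_le_m1)
      ultimately show ?thesis by simp
    qed
    moreover have "card (?f ` ({..<n} - {a, b})) \<le> card {y. RG n x y}" using sub fin2 by (rule card_mono[rotated])
    ultimately show ?thesis using n by linarith
  qed
  show "ABS (XG n) fst (RG n) d" unfolding ABS_def
  proof (intro conjI)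
    show "finite (XG n)" by (rule fin)
    have "(True, 0, 0) \<in> XG n" using n by (simp add: XG_def)
    then show "XG n \<noteq> {}" by blast
    show "\<forall>x y. RG n x y \<longrightarrow> x \<in> XG n \<and> y \<in> XG n \<and> RG n y x \<and> fst x \<noteq> fst y" unfolding RG_def by auto
    show "RICH (XG n) fst (RG n)" using G_rich n by auto
    show "\<forall>x\<in>XG n. d \<le> card {y. RG n x y}" using deg by auto
  qed
  show "hasC4 (XG n) (RG n)" unfolding hasC4_def
    by (rule bexI[of _ "(True, 0, 0)"], rule bexI[of _ "(False, 1, 1)"], rule bexI[of _ "(True, 2, 2)"],
        rule bexI[of _ "(False, 3, 3)"]) (use n in \<open>auto simp: RG_def XG_def\<close>)
qed

locale ppl =
  fixes X :: "'a set" and sd :: "'a \<Rightarrow> bool" and R :: "'a \<Rightarrow> 'a \<Rightarrow> bool"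
  assumes symR: "R x y \<Longrightarrow> R y x"
    and inX: "R x y \<Longrightarrow> x \<in> X \<and> y \<in> X"
    and bipR: "R x y \<Longrightarrow> sd x \<noteq> sd y"
    and join: "x \<in> X \<Longrightarrow> y \<in> X \<Longrightarrow> x \<noteq> y \<Longrightarrow> sd x = sd y \<Longrightarrow> \<exists>z. R x z \<and> R y z"
    and uniq: "x \<noteq> y \<Longrightarrow> R x z \<Longrightarrow> R y z \<Longrightarrow> R x w \<Longrightarrow> R y w \<Longrightarrow> z = w"
    and deg3: "x \<in> X \<Longrightarrow> \<exists>a b c. a \<noteq> b \<and> a \<noteq> c \<and> b \<noteq> c \<and> R x a \<and> R x b \<and> R x c"
    and neX: "X \<noteq> {}"
begin

abbreviation T where "T \<equiv> tyof sd R"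

lemma bip: "bip sd R" unfolding bip_def using symR bipR by auto

lemma Tsym: "T u v = T v u" using typ_sym[OF bip] .

lemma T_ADJ: "T u v = ADJ \<longleftrightarrow> R u v" unfolding tyof_def using bipR by auto
lemma T_SAME: "T u v = SAME \<longleftrightarrow> u \<noteq> v \<and> sd u = sd v" unfolding tyof_def using bipR by auto
lemma T_OPP: "T u v = OPP \<longleftrightarrow> \<not> R u v \<and> sd u \<noteq> sd v" unfolding tyof_def by auto
lemma T_EQ: "T u v = EQ \<longleftrightarrow> u = v" unfolding tyof_def by auto

lemma two_nb: "x \<in> X \<Longrightarrow> \<exists>a b. a \<noteq> b \<and> R x a \<and> R x b \<and> a \<noteq> u \<and> b \<noteq> u"
proof -
  assume "x \<in> X"
  then obtain a b c where "a \<noteq> b" "a \<noteq> c" "b \<noteq> c" "R x a" "R x b" "R x c" using deg3 by blast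
  then show ?thesis by metis
qed

lemma one_nb: "x \<in> X \<Longrightarrow> \<exists>a. R x a \<and> a \<noteq> u"
  using two_nb by blast

lemma sd3: "sd a \<noteq> sd b \<Longrightarrow> sd b \<noteq> sd c \<Longrightarrow> sd a = sd c" by auto

lemma far: "x \<in> X \<Longrightarrow> \<exists>m\<in>X. sd m \<noteq> sd x \<and> \<not> R x m"
proof -
  assume x: "x \<in> X"
  obtain l where l: "R x l" using one_nb[OF x] by blast
  have lX: "l \<in> X" using inX l by blast
  obtain y where y: "R l y" "y \<noteq> x" using one_nb[OF lX] by blast
  have yX: "y \<in> X" using inX y by blast
  obtain m where m: "R y m" "m \<noteq> l" using one_nb[OF yX] by blast
  have "\<not> R x m"
  proof
    assume "R x m"
    then have "l = m" using uniq[of x y l m] y l m symR by blast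
    then show False using m by simp
  qed
  moreover have "sd m \<noteq> sd x" using bipR[OF l] bipR[OF y(1)] bipR[OF m(1)] by auto
  moreover have "m \<in> X" using inX m by blast
  ultimately show ?thesis by blast
qed

lemma same_other: "x \<in> X \<Longrightarrow> \<exists>z\<in>X. z \<noteq> x \<and> z \<noteq> y \<and> sd z = sd x"
proof -
  assume x: "x \<in> X"
  obtain l where l: "R x l" using one_nb[OF x] by blast
  have lX: "l \<in> X" using inX l by blast
  obtain a b c where abc: "a \<noteq> b" "a \<noteq> c" "b \<noteq> c" "R l a" "R l b" "R l c" using deg3[OF lX] by blast
  have sds: "sd a = sd x" "sd b = sd x" "sd c = sd x"
    using bipR[OF l] bipR[OF abc(4)] bipR[OF abc(5)] bipR[OF abc(6)] by auto
  have X: "a \<in> X" "b \<in> X" "c \<in> X" using inX abc by blast+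
  show ?thesis using abc sds X by metis
qed

lemma same_adj_opp: "x \<in> X \<Longrightarrow> y \<in> X \<Longrightarrow> x \<noteq> y \<Longrightarrow> \<exists>z\<in>X. R x z \<and> \<not> R y z"
proof -
  assume x: "x \<in> X" and y: "y \<in> X" and xy: "x \<noteq> y"
  obtain a b where ab: "a \<noteq> b" "R x a" "R x b" using two_nb[OF x] by blast
  have "\<not> R y a \<or> \<not> R y b" using uniq[OF xy ab(2) _ ab(3)] ab(1) by blast
  then show ?thesis using ab inX by blast
qed

lemma same_opp_opp: "x \<in> X \<Longrightarrow> y \<in> X \<Longrightarrow> x \<noteq> y \<Longrightarrow> sd x = sd y \<Longrightarrow> \<exists>m\<in>X. \<not> R x m \<and> \<not> R y m \<and> sd m \<noteq> sd x"
proof -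
  assume x: "x \<in> X" and y: "y \<in> X" and xy: "x \<noteq> y" and s: "sd x = sd y"
  obtain l where l: "R x l" "R y l" using join[OF x y xy s] by blast
  have lX: "l \<in> X" using inX l by blast
  obtain w where w: "w \<in> X" "sd w \<noteq> sd l" "\<not> R l w" using far[OF lX] by blast
  have wx: "w \<noteq> x" "w \<noteq> y" using w l symR by blast+
  have sw: "sd w = sd x" using w(2) bipR[OF l(1)] by auto
  obtain m1 where m1: "R w m1" "R x m1" using join[OF w(1) x wx(1)] sw by blast
  obtain m2 where m2: "R w m2" "R y m2" using join[OF w(1) y wx(2)] sw s by blast
  obtain a b c where abc: "a \<noteq> b" "a \<noteq> c" "b \<noteq> c" "R w a" "R w b" "R w c" using deg3[OF w(1)] by blast
  obtain m where m: "R w m" "m \<noteq> m1" "m \<noteq> m2" using abc by metis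
  have "\<not> R x m" using uniq[OF wx(1) m(1) _ m1(1) m1(2)] m by blast
  moreover have "\<not> R y m" using uniq[OF wx(2) m(1) _ m2(1) m2(2)] m by blast
  moreover have "sd m \<noteq> sd x" using bipR[OF m(1)] sw by auto
  moreover have "m \<in> X" using inX m by blast
  ultimately show ?thesis by blast
qed

lemma opp_same_adj: "x \<in> X \<Longrightarrow> y \<in> X \<Longrightarrow> sd x \<noteq> sd y \<Longrightarrow> \<exists>z\<in>X. T x z = SAME \<and> T y z = ADJ"
proof -
  assume x: "x \<in> X" and y: "y \<in> X" and s: "sd x \<noteq> sd y"
  obtain z where z: "R y z" "z \<noteq> x" using one_nb[OF y] by blast
  have "sd z = sd x" using bipR[OF z(1)] s by auto
  then show ?thesis using z inX unfolding T_SAME T_ADJ by metis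
qed

lemma opp_same_opp: "x \<in> X \<Longrightarrow> y \<in> X \<Longrightarrow> sd x \<noteq> sd y \<Longrightarrow> \<exists>z\<in>X. T x z = SAME \<and> T y z = OPP"
proof -
  assume x: "x \<in> X" and y: "y \<in> X" and s: "sd x \<noteq> sd y"
  obtain w where w: "w \<in> X" "sd w \<noteq> sd y" "\<not> R y w" using far[OF y] by blast
  have sw: "sd w = sd x" using w s by auto
  show ?thesis
  proof (cases "w = x")
    case False
    then show ?thesis using w sw unfolding T_SAME T_OPP by metis
  next
    case True
    obtain m where m: "R x m" using one_nb[OF x] by blast
    have mX: "m \<in> X" using inX m by blast
    have my: "m \<noteq> y" using m w True symR by blast
    obtain a b where ab: "a \<noteq> b" "R m a" "R m b" "a \<noteq> x" "b \<noteq> x" using two_nb[OF mX] by blast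
    have "\<not> R y a \<or> \<not> R y b"
    proof (rule ccontr)
      assume "\<not> (\<not> R y a \<or> \<not> R y b)"
      then have "R a y" "R b y" using symR by blast+
      then have "m = y" using uniq[OF ab(1) _ _ _ _] ab symR by blast
      then show False using my by simp
    qed
    moreover have "sd a = sd x" "sd b = sd x" using bipR[OF m] bipR[OF ab(2)] bipR[OF ab(3)] by auto
    moreover have "a \<in> X" "b \<in> X" using inX ab by blast+
    ultimately show ?thesis using ab s unfolding T_SAME T_OPP by metis
  qed
qed

lemma rich: "RICH X sd R"
  unfolding RICH_def
proof (intro ballI allI impI)
  fix x y t1 t2 assume x: "x \<in> X" and y: "y \<in> X" and r: "realizable t1 t2 (T x y)"
  show "\<exists>z\<in>X. T x z = t1 \<and> T y z = t2"
  proof (cases "x = y")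
    case True
    then have tt: "t1 = t2" using r by (simp add: realizable_def T_EQ)
    have w0: "\<exists>z\<in>X. T x z = EQ \<and> T y z = EQ" using x True T_EQ by auto
    have w1: "\<exists>z\<in>X. T x z = ADJ \<and> T y z = ADJ" using one_nb[OF x] True inX T_ADJ by metis
    have w2: "\<exists>z\<in>X. T x z = SAME \<and> T y z = SAME" using same_other[OF x, of x] True T_SAME by metis
    have w3: "\<exists>z\<in>X. T x z = OPP \<and> T y z = OPP" using far[OF x] True T_OPP by metis
    show ?thesis using tt w0 w1 w2 w3 by (cases t1) auto
  next
    case False
    show ?thesis
    proof (cases "sd x = sd y")
      case True
      have t0: "T x y = SAME" using False True T_SAME by blast
      have w1: "\<exists>z\<in>X. T x z = ADJ \<and> T y z = ADJ" using join[OF x y False True] inX T_ADJ by metis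
      have w2: "\<exists>z\<in>X. T x z = SAME \<and> T y z = SAME" using same_other[OF x, of y] True T_SAME by metis
      have w3: "\<exists>z\<in>X. T x z = OPP \<and> T y z = OPP" using same_opp_opp[OF x y False True] True T_OPP by metis
      have w4: "\<exists>z\<in>X. T x z = ADJ \<and> T y z = OPP"
      proof -
        obtain z where z: "z \<in> X" "R x z" "\<not> R y z" using same_adj_opp[OF x y False] by blast
        have "sd z \<noteq> sd y" using bipR[OF z(2)] True by auto
        then show ?thesis using z T_ADJ T_OPP by metis
      qed
      have w5: "\<exists>z\<in>X. T x z = OPP \<and> T y z = ADJ"
      proof -
        obtain z where z: "z \<in> X" "R y z" "\<not> R x z" using same_adj_opp[OF y x] False by metis
        have "sd z \<noteq> sd x" using bipR[OF z(2)] True by auto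
        then show ?thesis using z T_ADJ T_OPP by metis
      qed
      have w6: "\<exists>z\<in>X. T x z = EQ \<and> T y z = SAME" using x t0 Tsym[of y x] T_EQ by auto
      have w7: "\<exists>z\<in>X. T x z = SAME \<and> T y z = EQ" using y t0 T_EQ by auto
      show ?thesis using r t0 w1 w2 w3 w4 w5 w6 w7
        by (cases t1; cases t2) (simp_all add: realizable_def)
    next
      case False2: False
      define t0 where "t0 = T x y"
      have t0c: "t0 = ADJ \<or> t0 = OPP" using False2 unfolding t0_def tyof_def by auto
      have w1: "\<exists>z\<in>X. T x z = SAME \<and> T y z = ADJ" using opp_same_adj[OF x y False2] .
      have w2: "\<exists>z\<in>X. T x z = SAME \<and> T y z = OPP" using opp_same_opp[OF x y False2] .
      have w3: "\<exists>z\<in>X. T x z = ADJ \<and> T y z = SAME" using opp_same_adj[OF y x] False2 by metis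
      have w4: "\<exists>z\<in>X. T x z = OPP \<and> T y z = SAME" using opp_same_opp[OF y x] False2 by metis
      have w6: "\<exists>z\<in>X. T x z = EQ \<and> T y z = t0" using x Tsym[of y x] T_EQ unfolding t0_def by auto
      have w7: "\<exists>z\<in>X. T x z = t0 \<and> T y z = EQ" using y T_EQ unfolding t0_def by auto
      have r': "realizable t1 t2 t0" using r unfolding t0_def .
      show ?thesis using r' t0c w1 w2 w3 w4 w6 w7
        by (cases t1; cases t2) (auto simp: realizable_def)
    qed
  qed
qed

lemma noC4: "\<not> hasC4 X R"
  unfolding hasC4_def
proof
  assume "\<exists>a\<in>X. \<exists>b\<in>X. \<exists>c\<in>X. \<exists>e\<in>X. a \<noteq> c \<and> b \<noteq> e \<and> R a b \<and> R b c \<and> R c e \<and> R e a"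
  then obtain a b c e where h: "a \<noteq> c" "b \<noteq> e" "R a b" "R b c" "R c e" "R e a" by blast
  have "b = e" using uniq[OF h(1) h(3) symR[OF h(4)] symR[OF h(6)] h(5)] .
  then show False using h(2) by simp
qed

lemma ABS: "finite X \<Longrightarrow> \<forall>x\<in>X. d \<le> card {y. R x y} \<Longrightarrow> ABS X sd R d"
  unfolding ABS_def using neX inX symR bipR rich by blast

end

definition okc :: "int \<Rightarrow> nat \<Rightarrow> int \<Rightarrow> int \<Rightarrow> bool" where
  "okc p k a b \<longleftrightarrow> k \<le> 2 \<and> 0 \<le> a \<and> a < p \<and> 0 \<le> b \<and> b < p \<and> (k \<noteq> 0 \<longrightarrow> b = 0) \<and> (k = 2 \<longrightarrow> a = 0)"

definition inc :: "int \<Rightarrow> nat \<Rightarrow> int \<Rightarrow> int \<Rightarrow> nat \<Rightarrow> int \<Rightarrow> int \<Rightarrow> bool" where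
  "inc p k x y k' m b \<longleftrightarrow> (k = 0 \<and> k' = 0 \<and> p dvd (y - m * x - b)) \<or> (k = 0 \<and> k' = 1 \<and> x = m)
     \<or> (k = 1 \<and> k' = 0 \<and> x = m) \<or> (k = 1 \<and> k' = 2) \<or> (k = 2 \<and> (k' = 1 \<or> k' = 2))"

definition XP :: "int \<Rightarrow> (bool \<times> nat \<times> int \<times> int) set" where
  "XP p = {(s, k, a, b). okc p k a b}"

definition RP :: "int \<Rightarrow> bool \<times> nat \<times> int \<times> int \<Rightarrow> bool \<times> nat \<times> int \<times> int \<Rightarrow> bool" where
  "RP p u v \<longleftrightarrow> (case u of (s, k, a, b) \<Rightarrow> case v of (s', k', a', b') \<Rightarrow>
     okc p k a b \<and> okc p k' a' b' \<and> s \<noteq> s' \<and> (if s then inc p k a b k' a' b' else inc p k' a' b' k a b))"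

locale primep =
  fixes p :: int
  assumes p2: "p > 2"
    and pd: "\<And>a b. p dvd a * b \<Longrightarrow> p dvd a \<or> p dvd b"
begin

lemma eqmod: "0 \<le> a \<Longrightarrow> a < p \<Longrightarrow> 0 \<le> b \<Longrightarrow> b < p \<Longrightarrow> p dvd (a - b) \<Longrightarrow> a = b"
proof (rule ccontr)
  assume h: "0 \<le> a" "a < p" "0 \<le> b" "b < p" "p dvd (a - b)" "a \<noteq> b"
  then have "p dvd \<bar>a - b\<bar>" by simp
  moreover have "\<bar>a - b\<bar> > 0" using h by simp
  ultimately have "p \<le> \<bar>a - b\<bar>" by (simp add: zdvd_imp_le)
  then show False using h by linarith
qed

lemma solve:
  assumes d: "\<not> p dvd d"
  shows "\<exists>m. 0 \<le> m \<and> m < p \<and> p dvd (m * d - c)"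
proof -
  define f where "f m = (m * d) mod p" for m
  have inj: "inj_on f {0..<p}"
  proof (rule inj_onI)
    fix m1 m2 assume m: "m1 \<in> {0..<p}" "m2 \<in> {0..<p}" "f m1 = f m2"
    then have "(m1 * d) mod p = (m2 * d) mod p" unfolding f_def by simp
    then have "p dvd (m1 * d - m2 * d)" by (simp only: mod_eq_dvd_iff)
    then have "p dvd ((m1 - m2) * d)" by (simp add: left_diff_distrib)
    then have "p dvd (m1 - m2)" using pd d by blast
    then show "m1 = m2" using m(1,2) by (intro eqmod) auto
  qed
  have sub: "f ` {0..<p} \<subseteq> {0..<p}"
  proof
    fix z assume "z \<in> f ` {0..<p}"
    then obtain m where "z = f m" by blast
    then show "z \<in> {0..<p}" using p2 unfolding f_def by simp
  qed
  have fin: "finite {0..<p}" by simp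
  have eq: "f ` {0..<p} = {0..<p}" using endo_inj_surj[OF fin sub inj] .
  have "c mod p \<in> {0..<p}" using p2 by simp
  then have "c mod p \<in> f ` {0..<p}" using eq by simp
  then obtain m where m: "m \<in> {0..<p}" "c mod p = f m" by (rule imageE)
  then have "(m * d) mod p = c mod p" unfolding f_def by simp
  then have "p dvd (m * d - c)" by (simp only: mod_eq_dvd_iff)
  then show ?thesis using m(1) by auto
qed

lemma nd: "0 \<le> a \<Longrightarrow> a < p \<Longrightarrow> 0 \<le> b \<Longrightarrow> b < p \<Longrightarrow> a \<noteq> b \<Longrightarrow> \<not> p dvd (a - b)"
  using eqmod by blast

lemma modr: "0 \<le> z mod p" "z mod p < p" "p dvd (z - z mod p)"
proof -
  show "0 \<le> z mod p" "z mod p < p" using p2 by simp_all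
  have "z - z mod p = p * (z div p)" by (simp add: minus_mod_eq_mult_div)
  then show "p dvd (z - z mod p)" by simp
qed

lemma K1: "0 \<le> y1 \<Longrightarrow> y1 < p \<Longrightarrow> 0 \<le> y2 \<Longrightarrow> y2 < p \<Longrightarrow> p dvd (y1 - m * x - b) \<Longrightarrow> p dvd (y2 - m * x - b) \<Longrightarrow> y1 = y2"
proof -
  assume h: "0 \<le> y1" "y1 < p" "0 \<le> y2" "y2 < p" "p dvd (y1 - m * x - b)" "p dvd (y2 - m * x - b)"
  then have "p dvd ((y1 - m * x - b) - (y2 - m * x - b))" using dvd_diff by blast
  then have "p dvd (y1 - y2)" by simp
  then show ?thesis using h by (intro eqmod) auto
qed

lemma K3: "0 \<le> b \<Longrightarrow> b < p \<Longrightarrow> 0 \<le> b' \<Longrightarrow> b' < p \<Longrightarrow> p dvd (y - m * x - b) \<Longrightarrow> p dvd (y - m * x - b') \<Longrightarrow> b = b'"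
proof -
  assume h: "0 \<le> b" "b < p" "0 \<le> b'" "b' < p" "p dvd (y - m * x - b)" "p dvd (y - m * x - b')"
  then have "p dvd ((y - m * x - b') - (y - m * x - b))" using dvd_diff by blast
  then have "p dvd (b - b')" by simp
  then show ?thesis using h by (intro eqmod) auto
qed

lemma Kmx:
  assumes r: "0 \<le> m" "m < p" "0 \<le> m'" "m' < p" "0 \<le> x1" "x1 < p" "0 \<le> x2" "x2 < p"
    and h: "p dvd (y1 - m * x1 - b)" "p dvd (y2 - m * x2 - b)" "p dvd (y1 - m' * x1 - b')" "p dvd (y2 - m' * x2 - b')"
  shows "m = m' \<or> x1 = x2"
proof -
  have "p dvd ((y1 - m' * x1 - b') - (y1 - m * x1 - b) - ((y2 - m' * x2 - b') - (y2 - m * x2 - b)))"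
    using dvd_diff[OF dvd_diff[OF h(3) h(1)] dvd_diff[OF h(4) h(2)]] .
  moreover have "(y1 - m' * x1 - b') - (y1 - m * x1 - b) - ((y2 - m' * x2 - b') - (y2 - m * x2 - b)) = (m - m') * (x1 - x2)"
    by (simp add: algebra_simps)
  ultimately have "p dvd (m - m') \<or> p dvd (x1 - x2)" using pd by metis
  then show ?thesis
  proof
    assume "p dvd (m - m')" then have "m = m'" using r by (intro eqmod) auto
    then show ?thesis by simp
  next
    assume "p dvd (x1 - x2)" then have "x1 = x2" using r by (intro eqmod) auto
    then show ?thesis by simp
  qed
qed

lemma pt_join:
  assumes o1: "okc p k1 x1 y1" and o2: "okc p k2 x2 y2" and ne: "(k1, x1, y1) \<noteq> (k2, x2, y2)"
  shows "\<exists>k m b. okc p k m b \<and> inc p k1 x1 y1 k m b \<and> inc p k2 x2 y2 k m b"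
proof -
  have W: "\<exists>k m b. okc p k m b \<and> inc p k1 x1 y1 k m b \<and> inc p k2 x2 y2 k m b"
    if o1: "okc p k1 x1 y1" and o2: "okc p k2 x2 y2" and ne: "(k1, x1, y1) \<noteq> (k2, x2, y2)" and le: "k1 \<le> k2"
    for k1 x1 y1 k2 x2 y2
  proof -
    have r: "0 \<le> x1" "x1 < p" "0 \<le> y1" "y1 < p" "0 \<le> x2" "x2 < p" "0 \<le> y2" "y2 < p" "k1 \<le> 2" "k2 \<le> 2"
      using o1 o2 unfolding okc_def by auto
    have ok0: "okc p 0 m b" if "0 \<le> m" "m < p" "0 \<le> b" "b < p" for m b using that unfolding okc_def by auto
    have ok1: "okc p 1 c 0" if "0 \<le> c" "c < p" for c using that p2 unfolding okc_def by auto
    have ok2: "okc p 2 0 0" using p2 unfolding okc_def by auto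
    consider "k1 = 0 \<and> k2 = 0" | "k1 = 0 \<and> k2 = 1" | "k1 = 0 \<and> k2 = 2" | "k1 = 1 \<and> k2 = 1" | "k1 = 1 \<and> k2 = 2" | "k1 = 2 \<and> k2 = 2"
      using le r by linarith
    then show ?thesis
    proof cases
      case 1
      show ?thesis
      proof (cases "x1 = x2")
        case True
        then show ?thesis using 1 ok1[of x1] r by (intro exI[of _ 1] exI[of _ x1] exI[of _ 0]) (auto simp: inc_def)
      next
        case False
        obtain m where m: "0 \<le> m" "m < p" "p dvd (m * (x1 - x2) - (y1 - y2))"
          using solve[OF nd[OF r(1,2,5,6) False]] by blast
        define b where "b = (y1 - m * x1) mod p"
        have b: "0 \<le> b" "b < p" "p dvd (y1 - m * x1 - b)" using modr[of "y1 - m * x1"] unfolding b_def by auto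
        have "p dvd ((y1 - m * x1 - b) + (m * (x1 - x2) - (y1 - y2)))" using b m dvd_add by blast
        moreover have "(y1 - m * x1 - b) + (m * (x1 - x2) - (y1 - y2)) = y2 - m * x2 - b"
          by (simp add: algebra_simps)
        ultimately have "p dvd (y2 - m * x2 - b)" by simp
        then show ?thesis using 1 b m ok0[of m b] by (intro exI[of _ 0] exI[of _ m] exI[of _ b]) (auto simp: inc_def)
      qed
    next
      case 2
      then have y2: "y2 = 0" using o2 unfolding okc_def by auto
      define b where "b = (y1 - x2 * x1) mod p"
      have b: "0 \<le> b" "b < p" "p dvd (y1 - x2 * x1 - b)" using modr[of "y1 - x2 * x1"] unfolding b_def by auto
      show ?thesis using 2 b ok0[of x2 b] r by (intro exI[of _ 0] exI[of _ x2] exI[of _ b]) (auto simp: inc_def)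
    next
      case 3
      show ?thesis using 3 ok1[of x1] r by (intro exI[of _ 1] exI[of _ x1] exI[of _ 0]) (auto simp: inc_def)
    next
      case 4
      show ?thesis using 4 ok2 by (intro exI[of _ 2] exI[of _ 0] exI[of _ 0]) (auto simp: inc_def)
    next
      case 5
      show ?thesis using 5 ok2 by (intro exI[of _ 2] exI[of _ 0] exI[of _ 0]) (auto simp: inc_def)
    next
      case 6
      then show ?thesis using o1 o2 ne unfolding okc_def by auto
    qed
  qed
  show ?thesis
  proof (cases "k1 \<le> k2")
    case True then show ?thesis using W[OF o1 o2 ne] by blast
  next
    case False
    then have "k2 \<le> k1" by simp
    from W[OF o2 o1 _ this] ne show ?thesis by metis
  qed
qed

lemma ln_meet:
  assumes o1: "okc p k1 m1 b1" and o2: "okc p k2 m2 b2" and ne: "(k1, m1, b1) \<noteq> (k2, m2, b2)"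
  shows "\<exists>k x y. okc p k x y \<and> inc p k x y k1 m1 b1 \<and> inc p k x y k2 m2 b2"
proof -
  have W: "\<exists>k x y. okc p k x y \<and> inc p k x y k1 m1 b1 \<and> inc p k x y k2 m2 b2"
    if o1: "okc p k1 m1 b1" and o2: "okc p k2 m2 b2" and ne: "(k1, m1, b1) \<noteq> (k2, m2, b2)" and le: "k1 \<le> k2"
    for k1 m1 b1 k2 m2 b2
  proof -
    have r: "0 \<le> m1" "m1 < p" "0 \<le> b1" "b1 < p" "0 \<le> m2" "m2 < p" "0 \<le> b2" "b2 < p" "k1 \<le> 2" "k2 \<le> 2"
      using o1 o2 unfolding okc_def by auto
    have ok0: "okc p 0 m b" if "0 \<le> m" "m < p" "0 \<le> b" "b < p" for m b using that unfolding okc_def by auto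
    have ok1: "okc p 1 c 0" if "0 \<le> c" "c < p" for c using that p2 unfolding okc_def by auto
    have ok2: "okc p 2 0 0" using p2 unfolding okc_def by auto
    consider "k1 = 0 \<and> k2 = 0" | "k1 = 0 \<and> k2 = 1" | "k1 = 0 \<and> k2 = 2" | "k1 = 1 \<and> k2 = 1" | "k1 = 1 \<and> k2 = 2" | "k1 = 2 \<and> k2 = 2"
      using le r by linarith
    then show ?thesis
    proof cases
      case 1
      show ?thesis
      proof (cases "m1 = m2")
        case True
        then show ?thesis using 1 ok1[of m1] r by (intro exI[of _ 1] exI[of _ m1] exI[of _ 0]) (auto simp: inc_def)
      next
        case False
        obtain x where x: "0 \<le> x" "x < p" "p dvd (x * (m1 - m2) - (b2 - b1))"
          using solve[OF nd[OF r(1,2,5,6) False]] by blast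
        define y where "y = (m1 * x + b1) mod p"
        have y: "0 \<le> y" "y < p" "p dvd (m1 * x + b1 - y)" using modr[of "m1 * x + b1"] unfolding y_def by auto
        have y1: "p dvd (y - m1 * x - b1)"
        proof -
          have "p dvd (- (m1 * x + b1 - y))" using y(3) by (simp only: dvd_minus_iff)
          then show ?thesis by (simp add: algebra_simps)
        qed
        have "p dvd ((y - m1 * x - b1) + (x * (m1 - m2) - (b2 - b1)))" using y1 x dvd_add by blast
        moreover have "(y - m1 * x - b1) + (x * (m1 - m2) - (b2 - b1)) = y - m2 * x - b2"
          by (simp add: algebra_simps)
        ultimately have y2: "p dvd (y - m2 * x - b2)" by simp
        show ?thesis using 1 x y y1 y2 ok0[of x y] by (intro exI[of _ 0] exI[of _ x] exI[of _ y]) (auto simp: inc_def)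
      qed
    next
      case 2
      then have "b2 = 0" using o2 unfolding okc_def by auto
      define y where "y = (m1 * m2 + b1) mod p"
      have y: "0 \<le> y" "y < p" "p dvd (m1 * m2 + b1 - y)" using modr[of "m1 * m2 + b1"] unfolding y_def by auto
      have y1: "p dvd (y - m1 * m2 - b1)"
      proof -
        have "p dvd (- (m1 * m2 + b1 - y))" using y(3) by (simp only: dvd_minus_iff)
        then show ?thesis by (simp add: algebra_simps)
      qed
      show ?thesis using 2 y y1 r ok0[of m2 y] by (intro exI[of _ 0] exI[of _ m2] exI[of _ y]) (auto simp: inc_def)
    next
      case 3
      show ?thesis using 3 ok1[of m1] r by (intro exI[of _ 1] exI[of _ m1] exI[of _ 0]) (auto simp: inc_def)
    next
      case 4
      show ?thesis using 4 ok2 by (intro exI[of _ 2] exI[of _ 0] exI[of _ 0]) (auto simp: inc_def)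
    next
      case 5
      show ?thesis using 5 ok2 by (intro exI[of _ 2] exI[of _ 0] exI[of _ 0]) (auto simp: inc_def)
    next
      case 6
      then show ?thesis using o1 o2 ne unfolding okc_def by auto
    qed
  qed
  show ?thesis
  proof (cases "k1 \<le> k2")
    case True then show ?thesis using W[OF o1 o2 ne] by blast
  next
    case False
    then have "k2 \<le> k1" by simp
    from W[OF o2 o1 _ this] ne show ?thesis by metis
  qed
qed

end

context primep
begin

lemma rngs: "okc p k a b \<Longrightarrow> 0 \<le> a \<and> a < p \<and> 0 \<le> b \<and> b < p \<and> k \<le> 2" unfolding okc_def by auto

lemma pt_uniq0:
  assumes o: "okc p k1 x1 y1" "okc p k2 x2 y2" "okc p k m b" "okc p k' m' b'"
    and ne: "(k1, x1, y1) \<noteq> (k2, x2, y2)" and le: "k1 \<le> k2"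
    and i: "inc p k1 x1 y1 k m b" "inc p k2 x2 y2 k m b" "inc p k1 x1 y1 k' m' b'" "inc p k2 x2 y2 k' m' b'"
  shows "(k, m, b) = (k', m', b')"
proof -
  note r1 = rngs[OF o(1)] and r2 = rngs[OF o(2)] and r3 = rngs[OF o(3)] and r4 = rngs[OF o(4)]
  consider "k1 = 0 \<and> k2 = 0" | "k1 = 0 \<and> k2 = 1" | "k1 = 0 \<and> k2 = 2" | "k1 = 1 \<and> k2 = 1" | "k1 = 1 \<and> k2 = 2" | "k1 = 2 \<and> k2 = 2"
    using le r1 r2 by linarith
  then show ?thesis
  proof cases
    case 1
    show ?thesis
    proof (cases "x1 = x2")
      case True
      then have yy: "y1 \<noteq> y2" using ne 1 by auto
      have "\<not> (k = 0)"
      proof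
        assume "k = 0"
        then have "p dvd (y1 - m * x1 - b)" "p dvd (y2 - m * x1 - b)" using i 1 True unfolding inc_def by auto
        then show False using K1 r1 r2 yy by blast
      qed
      moreover have "\<not> (k' = 0)"
      proof
        assume "k' = 0"
        then have "p dvd (y1 - m' * x1 - b')" "p dvd (y2 - m' * x1 - b')" using i 1 True unfolding inc_def by auto
        then show False using K1 r1 r2 yy by blast
      qed
      ultimately show ?thesis using i 1 o(3,4) unfolding inc_def okc_def by auto
    next
      case False
      have k0: "k = 0" "k' = 0" using i 1 False unfolding inc_def by auto
      then have d: "p dvd (y1 - m * x1 - b)" "p dvd (y2 - m * x2 - b)" "p dvd (y1 - m' * x1 - b')" "p dvd (y2 - m' * x2 - b')"
        using i 1 unfolding inc_def by auto
      have "m = m'" using Kmx[OF _ _ _ _ _ _ _ _ d] r1 r2 r3 r4 False by auto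
      moreover then have "b = b'" using K3[of b b' y1 m x1] d r3 r4 by auto
      ultimately show ?thesis using k0 by simp
    qed
  next
    case 2
    have k0: "k = 0" "k' = 0" "m = x2" "m' = x2" using i 2 unfolding inc_def by auto
    then have d: "p dvd (y1 - m * x1 - b)" "p dvd (y1 - m * x1 - b')" using i 2 unfolding inc_def by auto
    have "b = b'" using K3[OF _ _ _ _ d] r3 r4 by auto
    then show ?thesis using k0 by simp
  next
    case 3
    have "k = 1" "k' = 1" "m = x1" "m' = x1" using i 3 unfolding inc_def by auto
    then show ?thesis using o(3,4) unfolding okc_def by auto
  next
    case 4
    have "x1 \<noteq> x2" using ne 4 o(1,2) unfolding okc_def by auto
    then have "k = 2" "k' = 2" using i 4 unfolding inc_def by auto
    then show ?thesis using o(3,4) unfolding okc_def by auto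
  next
    case 5
    have "k = 2" "k' = 2" using i 5 unfolding inc_def by auto
    then show ?thesis using o(3,4) unfolding okc_def by auto
  next
    case 6
    then show ?thesis using o(1,2) ne unfolding okc_def by auto
  qed
qed

lemma pt_uniq:
  assumes o: "okc p k1 x1 y1" "okc p k2 x2 y2" "okc p k m b" "okc p k' m' b'"
    and ne: "(k1, x1, y1) \<noteq> (k2, x2, y2)"
    and i: "inc p k1 x1 y1 k m b" "inc p k2 x2 y2 k m b" "inc p k1 x1 y1 k' m' b'" "inc p k2 x2 y2 k' m' b'"
  shows "(k, m, b) = (k', m', b')"
proof (cases "k1 \<le> k2")
  case True show ?thesis using pt_uniq0[OF o ne True i] by simp
next
  case False
  then have "k2 \<le> k1" by simp
  moreover have "(k2, x2, y2) \<noteq> (k1, x1, y1)" using ne by metis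
  ultimately show ?thesis using pt_uniq0[OF o(2,1,3,4)] i by blast
qed

lemma ln_uniq0:
  assumes o: "okc p k1 m1 b1" "okc p k2 m2 b2" "okc p k x y" "okc p k' x' y'"
    and ne: "(k1, m1, b1) \<noteq> (k2, m2, b2)" and le: "k1 \<le> k2"
    and i: "inc p k x y k1 m1 b1" "inc p k x y k2 m2 b2" "inc p k' x' y' k1 m1 b1" "inc p k' x' y' k2 m2 b2"
  shows "(k, x, y) = (k', x', y')"
proof -
  note r1 = rngs[OF o(1)] and r2 = rngs[OF o(2)] and r3 = rngs[OF o(3)] and r4 = rngs[OF o(4)]
  consider "k1 = 0 \<and> k2 = 0" | "k1 = 0 \<and> k2 = 1" | "k1 = 0 \<and> k2 = 2" | "k1 = 1 \<and> k2 = 1" | "k1 = 1 \<and> k2 = 2" | "k1 = 2 \<and> k2 = 2"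
    using le r1 r2 by linarith
  then show ?thesis
  proof cases
    case 1
    show ?thesis
    proof (cases "m1 = m2")
      case True
      then have bb: "b1 \<noteq> b2" using ne 1 by auto
      have "\<not> (k = 0)"
      proof
        assume "k = 0"
        then have "p dvd (y - m1 * x - b1)" "p dvd (y - m1 * x - b2)" using i 1 True unfolding inc_def by auto
        then show False using K3 r1 r2 bb by blast
      qed
      moreover have "\<not> (k' = 0)"
      proof
        assume "k' = 0"
        then have "p dvd (y' - m1 * x' - b1)" "p dvd (y' - m1 * x' - b2)" using i 1 True unfolding inc_def by auto
        then show False using K3 r1 r2 bb by blast
      qed
      ultimately show ?thesis using i 1 o(3,4) unfolding inc_def okc_def by auto
    next
      case False
      have k0: "k = 0" "k' = 0" using i 1 False unfolding inc_def by auto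
      then have d: "p dvd (y - m1 * x - b1)" "p dvd (y' - m1 * x' - b1)" "p dvd (y - m2 * x - b2)" "p dvd (y' - m2 * x' - b2)"
        using i 1 unfolding inc_def by auto
      have "x = x'" using Kmx[OF _ _ _ _ _ _ _ _ d] r1 r2 r3 r4 False by auto
      moreover then have "y = y'" using K1[of y y' m1 x b1] d r3 r4 by auto
      ultimately show ?thesis using k0 by simp
    qed
  next
    case 2
    have k0: "k = 0" "k' = 0" "x = m2" "x' = m2" using i 2 unfolding inc_def by auto
    then have d: "p dvd (y - m1 * m2 - b1)" "p dvd (y' - m1 * m2 - b1)" using i 2 unfolding inc_def by auto
    have "y = y'" using K1[OF _ _ _ _ d] r3 r4 by auto
    then show ?thesis using k0 by simp
  next
    case 3
    have "k = 1" "k' = 1" "x = m1" "x' = m1" using i 3 unfolding inc_def by auto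
    then show ?thesis using o(3,4) unfolding okc_def by auto
  next
    case 4
    have "m1 \<noteq> m2" using ne 4 o(1,2) unfolding okc_def by auto
    then have "k = 2" "k' = 2" using i 4 unfolding inc_def by auto
    then show ?thesis using o(3,4) unfolding okc_def by auto
  next
    case 5
    have "k = 2" "k' = 2" using i 5 unfolding inc_def by auto
    then show ?thesis using o(3,4) unfolding okc_def by auto
  next
    case 6
    then show ?thesis using o(1,2) ne unfolding okc_def by auto
  qed
qed

lemma ln_uniq:
  assumes o: "okc p k1 m1 b1" "okc p k2 m2 b2" "okc p k x y" "okc p k' x' y'"
    and ne: "(k1, m1, b1) \<noteq> (k2, m2, b2)"
    and i: "inc p k x y k1 m1 b1" "inc p k x y k2 m2 b2" "inc p k' x' y' k1 m1 b1" "inc p k' x' y' k2 m2 b2"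
  shows "(k, x, y) = (k', x', y')"
proof (cases "k1 \<le> k2")
  case True show ?thesis using ln_uniq0[OF o ne True i] by simp
next
  case False
  then have "k2 \<le> k1" by simp
  moreover have "(k2, m2, b2) \<noteq> (k1, m1, b1)" using ne by metis
  ultimately show ?thesis using ln_uniq0[OF o(2,1,3,4)] i by blast
qed

lemma RP_simp: "RP p (s, k, a, b) (s', k', a', b') \<longleftrightarrow>
   okc p k a b \<and> okc p k' a' b' \<and> s \<noteq> s' \<and> (if s then inc p k a b k' a' b' else inc p k' a' b' k a b)"
  unfolding RP_def by simp

lemma finXP: "finite (XP p)"
proof -
  have "XP p \<subseteq> UNIV \<times> {..2} \<times> {0..<p} \<times> {0..<p}" unfolding XP_def okc_def by auto
  then show ?thesis by (rule finite_subset) simp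
qed

lemma fam_card:
  assumes "finite S" "f ` {0..<p} \<subseteq> S" "inj_on f {0..<p}"
  shows "nat p \<le> card S"
proof -
  have "card (f ` {0..<p}) = nat p" using card_image[OF assms(3)] by simp
  moreover have "card (f ` {0..<p}) \<le> card S" using card_mono[OF assms(1,2)] .
  ultimately show ?thesis by simp
qed

lemma degP: "x \<in> XP p \<Longrightarrow> nat p \<le> card {y. RP p x y}"
proof -
  assume x: "x \<in> XP p"
  obtain s k a b where xe: "x = (s, k, a, b)" by (cases x) auto
  have o: "okc p k a b" using x xe unfolding XP_def by auto
  note r = rngs[OF o]
  have "{y. RP p x y} \<subseteq> XP p"
  proof
    fix y assume "y \<in> {y. RP p x y}"
    then show "y \<in> XP p" using xe by (cases y) (auto simp: RP_simp XP_def)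
  qed
  then have fin: "finite {y. RP p x y}" using finXP by (rule finite_subset)
  have ok0: "okc p 0 m b" if "0 \<le> m" "m < p" "0 \<le> b" "b < p" for m b using that unfolding okc_def by auto
  have ok1: "okc p 1 c 0" if "0 \<le> c" "c < p" for c using that p2 unfolding okc_def by auto
  have ok2: "okc p 2 0 0" using p2 unfolding okc_def by auto
  have k3: "k = 0 \<or> k = 1 \<or> k = 2" using r by auto
  show ?thesis
  proof (cases s)
    case True
    consider "k = 0" | "k = 1" | "k = 2" using k3 by blast
    then show ?thesis
    proof cases
      case 1
      let ?f = "\<lambda>m. (False, 0::nat, m, (b - m * a) mod p)"
      have "?f ` {0..<p} \<subseteq> {y. RP p x y}"
      proof
        fix z assume "z \<in> ?f ` {0..<p}"
        then obtain m where m: "0 \<le> m" "m < p" "z = ?f m" by auto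
        have "p dvd (b - m * a - (b - m * a) mod p)" using modr by blast
        then show "z \<in> {y. RP p x y}" using m xe True 1 o ok0[of m "(b - m * a) mod p"] modr
          by (simp add: RP_simp inc_def)
      qed
      moreover have "inj_on ?f {0..<p}" by (auto simp: inj_on_def)
      ultimately show ?thesis using fam_card fin by blast
    next
      case 2
      let ?f = "\<lambda>c. (False, 0::nat, a, c)"
      have "?f ` {0..<p} \<subseteq> {y. RP p x y}" using xe True 2 o r ok0 by (auto simp: RP_simp inc_def)
      moreover have "inj_on ?f {0..<p}" by (auto simp: inj_on_def)
      ultimately show ?thesis using fam_card fin by blast
    next
      case 3
      let ?f = "\<lambda>c. (False, 1::nat, c, 0::int)"
      have "?f ` {0..<p} \<subseteq> {y. RP p x y}" using xe True 3 o r ok1 by (auto simp: RP_simp inc_def)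
      moreover have "inj_on ?f {0..<p}" by (auto simp: inj_on_def)
      ultimately show ?thesis using fam_card fin by blast
    qed
  next
    case False
    consider "k = 0" | "k = 1" | "k = 2" using k3 by blast
    then show ?thesis
    proof cases
      case 1
      let ?f = "\<lambda>t. (True, 0::nat, t, (a * t + b) mod p)"
      have "?f ` {0..<p} \<subseteq> {y. RP p x y}"
      proof
        fix z assume "z \<in> ?f ` {0..<p}"
        then obtain t where t: "0 \<le> t" "t < p" "z = ?f t" by auto
        have "p dvd (a * t + b - (a * t + b) mod p)" using modr by blast
        then have "p dvd (- (a * t + b - (a * t + b) mod p))" by (simp only: dvd_minus_iff)
        then have "p dvd ((a * t + b) mod p - a * t - b)" by (simp add: algebra_simps)
        then show "z \<in> {y. RP p x y}" using t xe False 1 o ok0[of t "(a * t + b) mod p"] modr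
          by (simp add: RP_simp inc_def)
      qed
      moreover have "inj_on ?f {0..<p}" by (auto simp: inj_on_def)
      ultimately show ?thesis using fam_card fin by blast
    next
      case 2
      let ?f = "\<lambda>c. (True, 0::nat, a, c)"
      have "?f ` {0..<p} \<subseteq> {y. RP p x y}" using xe False 2 o r ok0 by (auto simp: RP_simp inc_def)
      moreover have "inj_on ?f {0..<p}" by (auto simp: inj_on_def)
      ultimately show ?thesis using fam_card fin by blast
    next
      case 3
      let ?f = "\<lambda>c. (True, 1::nat, c, 0::int)"
      have "?f ` {0..<p} \<subseteq> {y. RP p x y}" using xe False 3 o r ok1 by (auto simp: RP_simp inc_def)
      moreover have "inj_on ?f {0..<p}" by (auto simp: inj_on_def)
      ultimately show ?thesis using fam_card fin by blast
    qed
  qed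
qed

lemma three_elems:
  assumes "3 \<le> card S"
  shows "\<exists>a b c. a \<noteq> b \<and> a \<noteq> c \<and> b \<noteq> c \<and> a \<in> S \<and> b \<in> S \<and> c \<in> S"
proof -
  have fS: "finite S" using assms card.infinite by fastforce
  have "S \<noteq> {}" using assms by auto
  then obtain a where a: "a \<in> S" by auto
  have "card (S - {a}) \<ge> 2" using assms a fS by (simp add: card_Diff_singleton)
  then have "S - {a} \<noteq> {}" by (cases "S - {a} = {}") auto
  then obtain b where b: "b \<in> S - {a}" by auto
  have "card (S - {a} - {b}) \<ge> 1" using assms a b fS by (simp add: card_Diff_singleton)
  then have "S - {a} - {b} \<noteq> {}" by (cases "S - {a} - {b} = {}") auto
  then obtain c where c: "c \<in> S - {a} - {b}" by auto
  show ?thesis using a b c by blast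
qed

lemma is_ppl: "ppl (XP p) fst (RP p)"
proof
  fix x y assume "RP p x y" then show "RP p y x" unfolding RP_def by (auto split: prod.splits)
next
  fix x y assume "RP p x y" then show "x \<in> XP p \<and> y \<in> XP p" unfolding RP_def XP_def by (auto split: prod.splits)
next
  fix x y assume "RP p x y" then show "fst x \<noteq> fst y" unfolding RP_def by (auto split: prod.splits)
next
  fix x y assume x: "x \<in> XP p" and y: "y \<in> XP p" and xy: "x \<noteq> y" and s: "fst x = fst y"
  obtain s1 k1 a1 b1 where xe: "x = (s1, k1, a1, b1)" by (cases x) auto
  obtain s2 k2 a2 b2 where ye: "y = (s2, k2, a2, b2)" by (cases y) auto
  have o: "okc p k1 a1 b1" "okc p k2 a2 b2" using x y xe ye unfolding XP_def by auto
  have ne: "(k1, a1, b1) \<noteq> (k2, a2, b2)" using xy s xe ye by auto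
  show "\<exists>z. RP p x z \<and> RP p y z"
  proof (cases s1)
    case True
    obtain k m b where kmb: "okc p k m b" "inc p k1 a1 b1 k m b" "inc p k2 a2 b2 k m b" using pt_join[OF o ne] by blast
    show ?thesis using kmb o True s xe ye by (intro exI[of _ "(False, k, m, b)"]) (simp add: RP_simp)
  next
    case False
    obtain k m b where kmb: "okc p k m b" "inc p k m b k1 a1 b1" "inc p k m b k2 a2 b2" using ln_meet[OF o ne] by blast
    show ?thesis using kmb o False s xe ye by (intro exI[of _ "(True, k, m, b)"]) (simp add: RP_simp)
  qed
next
  fix x y z w assume xy: "x \<noteq> y" and h: "RP p x z" "RP p y z" "RP p x w" "RP p y w"
  obtain s1 k1 a1 b1 where xe: "x = (s1, k1, a1, b1)" by (cases x) auto
  obtain s2 k2 a2 b2 where ye: "y = (s2, k2, a2, b2)" by (cases y) auto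
  obtain s3 k3 a3 b3 where ze: "z = (s3, k3, a3, b3)" by (cases z) auto
  obtain s4 k4 a4 b4 where we: "w = (s4, k4, a4, b4)" by (cases w) auto
  have H: "okc p k1 a1 b1" "okc p k2 a2 b2" "okc p k3 a3 b3" "okc p k4 a4 b4"
     "s1 \<noteq> s3" "s2 \<noteq> s3" "s1 \<noteq> s4" "s2 \<noteq> s4"
    using h xe ye ze we by (auto simp: RP_simp)
  have ss: "s1 = s2" "s3 = s4" using H by auto
  have ne: "(k1, a1, b1) \<noteq> (k2, a2, b2)" using xy xe ye ss by auto
  show "z = w"
  proof (cases s1)
    case True
    have i: "inc p k1 a1 b1 k3 a3 b3" "inc p k2 a2 b2 k3 a3 b3" "inc p k1 a1 b1 k4 a4 b4" "inc p k2 a2 b2 k4 a4 b4"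
      using h xe ye ze we True ss by (auto simp: RP_simp)
    have "(k3, a3, b3) = (k4, a4, b4)" using pt_uniq[OF H(1-4) ne i] .
    then show ?thesis using ze we ss by simp
  next
    case False
    have i: "inc p k3 a3 b3 k1 a1 b1" "inc p k3 a3 b3 k2 a2 b2" "inc p k4 a4 b4 k1 a1 b1" "inc p k4 a4 b4 k2 a2 b2"
      using h xe ye ze we False ss by (auto simp: RP_simp)
    have "(k3, a3, b3) = (k4, a4, b4)" using ln_uniq[OF H(1,2,3,4) ne i] .
    then show ?thesis using ze we ss by simp
  qed
next
  fix x assume x: "x \<in> XP p"
  have "3 \<le> card {y. RP p x y}" using degP[OF x] p2 by linarith
  then obtain a b c where "a \<noteq> b" "a \<noteq> c" "b \<noteq> c" "a \<in> {y. RP p x y}" "b \<in> {y. RP p x y}" "c \<in> {y. RP p x y}"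
    using three_elems by blast
  then show "\<exists>a b c. a \<noteq> b \<and> a \<noteq> c \<and> b \<noteq> c \<and> RP p x a \<and> RP p x b \<and> RP p x c" by blast
next
  have "(True, 2, 0, 0) \<in> XP p" using p2 unfolding XP_def okc_def by auto
  then show "XP p \<noteq> {}" by blast
qed

lemma H_ABS: "nat p \<ge> d \<Longrightarrow> ABS (XP p) fst (RP p) d \<and> \<not> hasC4 (XP p) (RP p)"
proof -
  assume d: "nat p \<ge> d"
  interpret ppl "XP p" fst "RP p" by (rule is_ppl)
  have "\<forall>x\<in>XP p. d \<le> card {y. RP p x y}" using degP d by (meson le_trans)
  then show ?thesis using ABS[OF finXP] noC4 by blast
qed

end

lemma H_exists: "\<exists>p. ABS (XP p) fst (RP p) d \<and> \<not> hasC4 (XP p) (RP p)"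
proof -
  obtain q :: nat where q: "prime q" "q > d + 3" using bigger_prime by blast
  interpret primep "int q"
  proof
    show "int q > 2" using q by simp
    fix a b :: int assume "int q dvd a * b"
    then show "int q dvd a \<or> int q dvd b" using prime_dvd_multD[of "int q" a b] q by simp
  qed
  have "nat (int q) \<ge> d" using q by simp
  then show ?thesis using H_ABS by blast
qed

lemma G_exists: "\<exists>n. ABS (XG n) fst (RG n) d \<and> hasC4 (XG n) (RG n)"
  using G_ABS[of "d + 5" d] by auto

lemma counter:
  fixes X1 :: "'a::countable set" and X2 :: "'b::countable set"
  assumes A1: "ABS X1 sd1 R1 k" and A2: "ABS X2 sd2 R2 k" and c1: "hasC4 X1 R1" and c2: "\<not> hasC4 X2 R2"
    and sp: "sentence \<Phi>" and vw: "var_width \<Phi> \<le> 3"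
    and H: "\<forall>V E. simple_graph V E \<and> two_connected V E \<and> k \<le> treewidth V E \<longrightarrow>
         (models V E \<Phi> \<longleftrightarrow> contains_subgraph V E C4_V C4_E)"
  shows False
proof -
  let ?V1 = "to_nat ` X1" and ?E1 = "imgE X1 R1" and ?V2 = "to_nat ` X2" and ?E2 = "imgE X2 R2"
  note t1 = transfer[OF A1] and t2 = transfer[OF A2]
  have irr1: "\<forall>u. \<not> ?E1 u u" and irr2: "\<forall>u. \<not> ?E2 u u"
    using t1(1) t2(1) unfolding simple_graph_def by auto
  have g1: "simple_graph ?V1 ?E1 \<and> two_connected ?V1 ?E1 \<and> k \<le> treewidth ?V1 ?E1"
    using t1 two_conn[OF t1(1) t1(2) t1(3) t1(4)] treewidth_ge[OF t1(1) t1(4) t1(5)] by blast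
  have g2: "simple_graph ?V2 ?E2 \<and> two_connected ?V2 ?E2 \<and> k \<le> treewidth ?V2 ?E2"
    using t2 two_conn[OF t2(1) t2(2) t2(3) t2(4)] treewidth_ge[OF t2(1) t2(4) t2(5)] by blast
  have m1: "models ?V1 ?E1 \<Phi>" using H g1 t1(6) c1 by blast
  have m2: "\<not> models ?V2 ?E2 \<Phi>" using H g2 t2(6) c2 by blast
  have "models ?V1 ?E1 \<Phi> \<longleftrightarrow> models ?V2 ?E2 \<Phi>"
    by (rule models_equiv[OF t1(2) t2(2) t1(3) t2(3) t1(4) t2(4) irr1 irr2 sp vw])
  then show False using m1 m2 by simp
qed

theorem proposition18:
  shows "W'_tw C4_V C4_E = 4"
proof -
  let ?P = "\<lambda>m. \<exists>\<Phi> k. sentence \<Phi> \<and> var_width \<Phi> = m \<and>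
      (\<forall>V E. simple_graph V E \<and> two_connected V E \<and> treewidth V E \<ge> k \<longrightarrow>
         (models V E \<Phi> \<longleftrightarrow> contains_subgraph V E C4_V C4_E))"
  have P4: "?P 4"
  proof (intro exI[of _ Phi4] exI[of _ 0] conjI allI impI)
    show "sentence Phi4" by (rule Phi4_sentence)
    show "var_width Phi4 = 4" by (rule Phi4_width)
    fix V E assume "simple_graph V E \<and> two_connected V E \<and> 0 \<le> treewidth V E"
    then show "models V E Phi4 \<longleftrightarrow> contains_subgraph V E C4_V C4_E" using Phi4_iff by blast
  qed
  have lo: "4 \<le> m" if Pm: "?P m" for m
  proof (rule ccontr)
    assume "\<not> 4 \<le> m"
    then have m3: "m \<le> 3" by simp
    obtain \<Phi> k where \<Phi>: "sentence \<Phi>" "var_width \<Phi> = m"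
      "\<forall>V E. simple_graph V E \<and> two_connected V E \<and> treewidth V E \<ge> k \<longrightarrow>
         (models V E \<Phi> \<longleftrightarrow> contains_subgraph V E C4_V C4_E)" using Pm by blast
    obtain n where n: "ABS (XG n) fst (RG n) k" "hasC4 (XG n) (RG n)" using G_exists by blast
    obtain p where p: "ABS (XP p) fst (RP p) k" "\<not> hasC4 (XP p) (RP p)" using H_exists by blast
    show False using counter[OF n(1) p(1) n(2) p(2) \<Phi>(1) _ \<Phi>(3)] \<Phi>(2) m3 by simp
  qed
  show ?thesis unfolding W'_tw_def
  proof (rule Least_equality)
    show "?P 4" by (rule P4)
  next
    fix y assume "?P y" then show "4 \<le> y" by (rule lo)
  qed
qed

end
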